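(* In the setting of the context, there exists an integer $\ell_0\le 6nd$ such that the following holds. If $\bm f'\in Y^{M,d}$ satisfies $L(\bm f')(\zeta)=0$ for all $\zeta\in b\Delta$ and $\frac{\partial^j\bm f'}{\partial\zeta^j}(1)=0$ for $j=0,1,\dots,\ell_0$, then $\bm f'=0$. In other words, the map $\bm f'\mapsto(\bm f'(1),\partial\bm f'(1),\dots,\partial^{\ell_0}\bm f'(1))\in\mathbb C^{(2n+2)(\ell_0+1)}$ is injective on $\ker L$.
   Context: Setting: $\Delta$ is the unit disc and $b\Delta$ the unit circle. $M=(m_1,\dots,m_n)$ is a vector of positive even integers, and $M\cdot J=\sum m_ij_i$. $P:\mathbb C^n\to\mathbb R$ is a real polynomial with $P(t^{m_1}z_1,\dots,t^{m_n}z_n,t^{m_1}\bar z_1,\dots)=t^dP(z,\bar z)$ for real $t$, with $d$ even. Write $P=\sum_{M\cdot J+M\cdot K=d}\alpha_{JK}z^J\bar z^K$, with $P\not\equiv0$ and $\alpha_{JK}=0$ if $J=0$ or $K=0$. $k_0$ is the largest $k$ with $d/2\le k\le d-1$ such that $\alpha_{JK}\ne0$ for some $M\cdot K=k$. Admissible vector: $h^v(\zeta)=((1-\zeta)^{m_1}v_1,\dots,(1-\zeta)^{m_n}v_n)$ and $Q^v_{i\bar j}(\zeta)=\zeta^{k_0}P_{z_i\bar z_j}(v,((-1/\zeta)^{m_l}\bar v_l)_l)$, a holomorphic polynomial (with $z,\bar z$ independent variables in $P_{z_i\bar z_j}$). Let $Q^v=\det(Q^v_{i\bar j})$. The vector $v$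 is admissible if there is $g^v$, continuous on $\overline\Delta$ and holomorphic on $\Delta$, with $(h^v,g^v)(b\Delta)\subset S_P=\{\mathrm{Re}\,w=P\}$, $(h^v,g^v)(\Delta)\not\subset S_P$, and $Q^v\ne0$ on $b\Delta$. Fix such $v$ with $g^v(1)=0$. Function spaces: fix $k\ge1$ and $0<\alpha<1$. $\mathcal A^{k,\alpha}$ is the space of $C^{k,\alpha}$ complex functions on $b\Delta$ that extend holomorphically to $\Delta$ (continuous on $\overline\Delta$). $\mathcal A^{k,\alpha}_{0^m}=\{(1-\zeta)^mf:f\in\mathcal A^{k,\alpha}\}$. Define $$Y^{M,d}=\prod_{i=1}^n\mathcal A^{k,\alpha}_{0^{m_i}}\times\mathcal A^{k,\alpha}_{0^1}\times\prod_{i=1}^n\mathcal A^{k,\alpha}_{0^{d-m_i}}\times\mathcal A^{k,\alpha},$$ with elements written $\bm f=(z,w,\tilde z,\tilde w)$-components $(h,g,\tilde h,\tilde g)$. Initial disc: $\bm f^0=(h^v,g^v,\tilde h^0,-\zeta^{k_0}/2)$, where $\tilde h^0$ is the holomorphic extension of $\zeta^{k_0}P_z(h^v,\overline{h^v})$. For $\zeta\in b\Delta$, define the real functions $\tilde\rho(\zeta)=(\tilde\rho_1,\dots,\tilde\rho_{2n+2})$ of $(z,w,\tilde z,\tilde w)\in\mathbb C^{2n+2}$ by: - $\tilde\rho_1=-\mathrm{Re}\,w+P(z,\bar z)$; - $\tilde\rho_{2i}=2\,\mathrm{Re}\big(\tilde z_i+2\tilde wP_{z_i}(z,\bar z)\big)$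 and $\tilde\rho_{2i+1}=-2\,\mathrm{Im}\big(\tilde z_i+2\tilde wP_{z_i}(z,\bar z)\big)$ for $i=1,\dots,n$; - $\tilde\rho_{2n+2}=i(\zeta^{-k_0}\tilde w-\zeta^{k_0}\overline{\tilde w})$. These are defining equations of $\{(z,w,\tilde z,\tilde w):(z,w)\in S_P,(\tilde z,\tilde w)\in\zeta^{k_0}(\mathbb R\setminus\{0\})(P_z,-1/2)\}$. The linear operator $L$ on $Y^{M,d}$ is the linearization at $\bm f^0$ of $\bm f\mapsto\tilde\rho(\bm f)$: $$L(\bm f')(\zeta)=\frac{d}{dt}\Big|_{t=0}\tilde\rho(\zeta)\big(\bm f^0(\zeta)+t\bm f'(\zeta)\big),\qquad\zeta\in b\Delta.$$ Equivalently, $L(\bm f')=2\,\mathrm{Re}[\overline{G(\zeta)}\bm f']$ with $G=(\tilde\rho_{\bar z},\tilde\rho_{\bar w},\tilde\rho_{\bar{\tilde z}},\tilde\rho_{\bar{\tilde w}})(\bm f^0)$. *)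

theory Defs
  imports "HOL-Analysis.Analysis"
begin

text \<open>Multi-indices are functions 'n => nat on a finite coordinate type 'n (n = CARD('n)).\<close>

definition Mdot :: "('n::finite \<Rightarrow> nat) \<Rightarrow> ('n \<Rightarrow> nat) \<Rightarrow> nat" where
  "Mdot M J = (\<Sum>i\<in>UNIV. M i * J i)"

definition idx :: "('n::finite \<Rightarrow> nat) \<Rightarrow> nat \<Rightarrow> (('n \<Rightarrow> nat) \<times> ('n \<Rightarrow> nat)) set" where
  "idx M d = {(J, K). Mdot M J + Mdot M K = d}"

definition mono :: "('n::finite \<Rightarrow> nat) \<Rightarrow> ('n \<Rightarrow> complex) \<Rightarrow> complex" where
  "mono J z = (\<Prod>l\<in>UNIV. z l ^ J l)"

definition dmono :: "('n::finite \<Rightarrow> nat) \<Rightarrow> 'n \<Rightarrow> ('n \<Rightarrow> complex) \<Rightarrow> complex" where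
  "dmono J i z = of_nat (J i) * (\<Prod>l\<in>UNIV. z l ^ (if l = i then J l - 1 else J l))"

text \<open>Complexified polynomial P(z,w) = sum alpha_JK z^J w^K, with z, w independent;
  the real polynomial is P(z, conj z).\<close>
definition Ppoly :: "('n::finite \<Rightarrow> nat) \<Rightarrow> nat \<Rightarrow> (('n \<Rightarrow> nat) \<Rightarrow> ('n \<Rightarrow> nat) \<Rightarrow> complex)
    \<Rightarrow> ('n \<Rightarrow> complex) \<Rightarrow> ('n \<Rightarrow> complex) \<Rightarrow> complex" where
  "Ppoly M d \<alpha> z w = (\<Sum>(J, K)\<in>idx M d. \<alpha> J K * mono J z * mono K w)"

definition Pz :: "('n::finite \<Rightarrow> nat) \<Rightarrow> nat \<Rightarrow> (('n \<Rightarrow> nat) \<Rightarrow> ('n \<Rightarrow> nat) \<Rightarrow> complex)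
    \<Rightarrow> 'n \<Rightarrow> ('n \<Rightarrow> complex) \<Rightarrow> ('n \<Rightarrow> complex) \<Rightarrow> complex" where
  "Pz M d \<alpha> i z w = (\<Sum>(J, K)\<in>idx M d. \<alpha> J K * dmono J i z * mono K w)"

definition Pzw :: "('n::finite \<Rightarrow> nat) \<Rightarrow> nat \<Rightarrow> (('n \<Rightarrow> nat) \<Rightarrow> ('n \<Rightarrow> nat) \<Rightarrow> complex)
    \<Rightarrow> 'n \<Rightarrow> 'n \<Rightarrow> ('n \<Rightarrow> complex) \<Rightarrow> ('n \<Rightarrow> complex) \<Rightarrow> complex" where
  "Pzw M d \<alpha> i j z w = (\<Sum>(J, K)\<in>idx M d. \<alpha> J K * dmono J i z * dmono K j w)"

text \<open>Real polynomial P(z, zbar) (real-valued by hypothesis; Re is then harmless).\<close>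
definition Preal :: "('n::finite \<Rightarrow> nat) \<Rightarrow> nat \<Rightarrow> (('n \<Rightarrow> nat) \<Rightarrow> ('n \<Rightarrow> nat) \<Rightarrow> complex)
    \<Rightarrow> ('n \<Rightarrow> complex) \<Rightarrow> real" where
  "Preal M d \<alpha> z = Re (Ppoly M d \<alpha> z (\<lambda>l. cnj (z l)))"

definition kzero :: "('n::finite \<Rightarrow> nat) \<Rightarrow> nat \<Rightarrow> (('n \<Rightarrow> nat) \<Rightarrow> ('n \<Rightarrow> nat) \<Rightarrow> complex) \<Rightarrow> nat" where
  "kzero M d \<alpha> = (GREATEST k. d div 2 \<le> k \<and> k \<le> d - 1 \<and> (\<exists>J K. \<alpha> J K \<noteq> 0 \<and> Mdot M K = k))"

definition hv :: "('n::finite \<Rightarrow> nat) \<Rightarrow> ('n \<Rightarrow> complex) \<Rightarrow> complex \<Rightarrow> ('n \<Rightarrow> complex)" where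
  "hv M v \<zeta> = (\<lambda>i. (1 - \<zeta>) ^ M i * v i)"

definition Qv_entry :: "('n::finite \<Rightarrow> nat) \<Rightarrow> nat \<Rightarrow> (('n \<Rightarrow> nat) \<Rightarrow> ('n \<Rightarrow> nat) \<Rightarrow> complex)
    \<Rightarrow> ('n \<Rightarrow> complex) \<Rightarrow> 'n \<Rightarrow> 'n \<Rightarrow> complex \<Rightarrow> complex" where
  "Qv_entry M d \<alpha> v i j \<zeta> =
     \<zeta> ^ kzero M d \<alpha> * Pzw M d \<alpha> i j v (\<lambda>l. (- 1 / \<zeta>) ^ M l * cnj (v l))"

definition Qv :: "('n::finite \<Rightarrow> nat) \<Rightarrow> nat \<Rightarrow> (('n \<Rightarrow> nat) \<Rightarrow> ('n \<Rightarrow> nat) \<Rightarrow> complex)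
    \<Rightarrow> ('n \<Rightarrow> complex) \<Rightarrow> complex \<Rightarrow> complex" where
  "Qv M d \<alpha> v \<zeta> = det (\<chi> i j. Qv_entry M d \<alpha> v i j \<zeta> :: complex ^ 'n ^ 'n)"

definition admissible_pair :: "('n::finite \<Rightarrow> nat) \<Rightarrow> nat \<Rightarrow> (('n \<Rightarrow> nat) \<Rightarrow> ('n \<Rightarrow> nat) \<Rightarrow> complex)
    \<Rightarrow> ('n \<Rightarrow> complex) \<Rightarrow> (complex \<Rightarrow> complex) \<Rightarrow> bool" where
  "admissible_pair M d \<alpha> v g \<longleftrightarrow>
     continuous_on (cball 0 1) g \<and> g holomorphic_on ball 0 1 \<and>
     (\<forall>\<zeta>\<in>sphere 0 1. Re (g \<zeta>) = Preal M d \<alpha> (hv M v \<zeta>)) \<and>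
     (\<exists>\<zeta>\<in>ball 0 1. Re (g \<zeta>) \<noteq> Preal M d \<alpha> (hv M v \<zeta>)) \<and>
     (\<forall>\<zeta>\<in>sphere 0 1. Qv M d \<alpha> v \<zeta> \<noteq> 0)"

definition Cka_circle :: "nat \<Rightarrow> real \<Rightarrow> (complex \<Rightarrow> complex) \<Rightarrow> bool" where
  "Cka_circle k a f \<longleftrightarrow>
     (\<exists>D :: nat \<Rightarrow> real \<Rightarrow> complex.
        (\<forall>\<theta>. D 0 \<theta> = f (cis \<theta>)) \<and>
        (\<forall>i<k. \<forall>\<theta>. (D i has_vector_derivative D (Suc i) \<theta>) (at \<theta>)) \<and>
        (\<exists>C. \<forall>s t. norm (D k s - D k t) \<le> C * \<bar>s - t\<bar> powr a))"

definition A_space :: "nat \<Rightarrow> real \<Rightarrow> (complex \<Rightarrow> complex) set" where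
  "A_space k a = {f. continuous_on (cball 0 1) f \<and> f holomorphic_on ball 0 1 \<and> Cka_circle k a f}"

definition A0_space :: "nat \<Rightarrow> real \<Rightarrow> nat \<Rightarrow> (complex \<Rightarrow> complex) set" where
  "A0_space k a m = {F. \<exists>f\<in>A_space k a. \<forall>\<zeta>\<in>cball 0 1. F \<zeta> = (1 - \<zeta>) ^ m * f \<zeta>}"

type_synonym 'n disc4 =
  "('n \<Rightarrow> complex \<Rightarrow> complex) \<times> (complex \<Rightarrow> complex) \<times> ('n \<Rightarrow> complex \<Rightarrow> complex) \<times> (complex \<Rightarrow> complex)"

definition Y_space :: "nat \<Rightarrow> real \<Rightarrow> ('n::finite \<Rightarrow> nat) \<Rightarrow> nat \<Rightarrow> 'n disc4 set" where
  "Y_space k a M d = {(h, g, ht, gt).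
      (\<forall>i. h i \<in> A0_space k a (M i)) \<and> g \<in> A0_space k a 1 \<and>
      (\<forall>i. ht i \<in> A0_space k a (d - M i)) \<and> gt \<in> A_space k a}"

type_synonym 'n pt4 = "('n \<Rightarrow> complex) \<times> complex \<times> ('n \<Rightarrow> complex) \<times> complex"

definition rho1 :: "('n::finite \<Rightarrow> nat) \<Rightarrow> nat \<Rightarrow> (('n \<Rightarrow> nat) \<Rightarrow> ('n \<Rightarrow> nat) \<Rightarrow> complex) \<Rightarrow> 'n pt4 \<Rightarrow> real" where
  "rho1 M d \<alpha> p = (case p of (z, w, zt, wt) \<Rightarrow> - Re w + Preal M d \<alpha> z)"

definition rhoRe :: "('n::finite \<Rightarrow> nat) \<Rightarrow> nat \<Rightarrow> (('n \<Rightarrow> nat) \<Rightarrow> ('n \<Rightarrow> nat) \<Rightarrow> complex) \<Rightarrow> 'n \<Rightarrow> 'n pt4 \<Rightarrow> real" where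
  "rhoRe M d \<alpha> i p = (case p of (z, w, zt, wt) \<Rightarrow>
      2 * Re (zt i + 2 * wt * Pz M d \<alpha> i z (\<lambda>l. cnj (z l))))"

definition rhoIm :: "('n::finite \<Rightarrow> nat) \<Rightarrow> nat \<Rightarrow> (('n \<Rightarrow> nat) \<Rightarrow> ('n \<Rightarrow> nat) \<Rightarrow> complex) \<Rightarrow> 'n \<Rightarrow> 'n pt4 \<Rightarrow> real" where
  "rhoIm M d \<alpha> i p = (case p of (z, w, zt, wt) \<Rightarrow>
      - 2 * Im (zt i + 2 * wt * Pz M d \<alpha> i z (\<lambda>l. cnj (z l))))"

text \<open>i (zeta^{-k0} w~ - zeta^{k0} conj w~), which is real; we take its real part.\<close>
definition rhoLast :: "nat \<Rightarrow> complex \<Rightarrow> 'n pt4 \<Rightarrow> real" where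
  "rhoLast k0 \<zeta> p = (case p of (z, w, zt, wt) \<Rightarrow>
      Re (\<i> * (inverse \<zeta> ^ k0 * wt - \<zeta> ^ k0 * cnj wt)))"

text \<open>The initial disc f^0 evaluated on the circle (h~^0 agrees there with
  zeta^{k0} P_z(h^v, conj h^v), and only boundary values enter L).\<close>
definition f0_pt :: "('n::finite \<Rightarrow> nat) \<Rightarrow> nat \<Rightarrow> (('n \<Rightarrow> nat) \<Rightarrow> ('n \<Rightarrow> nat) \<Rightarrow> complex)
    \<Rightarrow> ('n \<Rightarrow> complex) \<Rightarrow> (complex \<Rightarrow> complex) \<Rightarrow> complex \<Rightarrow> 'n pt4" where
  "f0_pt M d \<alpha> v g \<zeta> =
     (hv M v \<zeta>, g \<zeta>,
      (\<lambda>i. \<zeta> ^ kzero M d \<alpha> * Pz M d \<alpha> i (hv M v \<zeta>) (\<lambda>l. cnj (hv M v \<zeta> l))),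
      - (\<zeta> ^ kzero M d \<alpha>) / 2)"

definition line_pt :: "'n pt4 \<Rightarrow> 'n disc4 \<Rightarrow> complex \<Rightarrow> real \<Rightarrow> 'n pt4" where
  "line_pt p F \<zeta> t = (case p of (z, w, zt, wt) \<Rightarrow> case F of (h, g, ht, gt) \<Rightarrow>
      ((\<lambda>i. z i + of_real t * h i \<zeta>), w + of_real t * g \<zeta>,
       (\<lambda>i. zt i + of_real t * ht i \<zeta>), wt + of_real t * gt \<zeta>))"

definition L_vanishes_at :: "('n::finite \<Rightarrow> nat) \<Rightarrow> nat \<Rightarrow> (('n \<Rightarrow> nat) \<Rightarrow> ('n \<Rightarrow> nat) \<Rightarrow> complex)
    \<Rightarrow> ('n \<Rightarrow> complex) \<Rightarrow> (complex \<Rightarrow> complex) \<Rightarrow> 'n disc4 \<Rightarrow> complex \<Rightarrow> bool" where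
  "L_vanishes_at M d \<alpha> v g F \<zeta> \<longleftrightarrow>
     (let p = f0_pt M d \<alpha> v g \<zeta> in
       ((\<lambda>t. rho1 M d \<alpha> (line_pt p F \<zeta> t)) has_real_derivative 0) (at 0) \<and>
       (\<forall>i. ((\<lambda>t. rhoRe M d \<alpha> i (line_pt p F \<zeta> t)) has_real_derivative 0) (at 0)) \<and>
       (\<forall>i. ((\<lambda>t. rhoIm M d \<alpha> i (line_pt p F \<zeta> t)) has_real_derivative 0) (at 0)) \<and>
       ((\<lambda>t. rhoLast (kzero M d \<alpha>) \<zeta> (line_pt p F \<zeta> t)) has_real_derivative 0) (at 0))"

definition derivs_vanish_at_1 :: "nat \<Rightarrow> (complex \<Rightarrow> complex) \<Rightarrow> bool" where
  "derivs_vanish_at_1 l f \<longleftrightarrow>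
     (\<exists>e>0. \<exists>D :: nat \<Rightarrow> complex \<Rightarrow> complex.
        (\<forall>w\<in>cball 0 1 \<inter> ball 1 e. D 0 w = f w) \<and>
        (\<forall>i<l. \<forall>w\<in>cball 0 1 \<inter> ball 1 e. (Suc i < l \<or> w = 1) \<longrightarrow>
            (D i has_field_derivative D (Suc i) w) (at w within cball 0 1 \<inter> ball 1 e)) \<and>
        (\<forall>j\<le>l. D j 1 = 0))"

definition disc4_derivs_vanish_at_1 :: "nat \<Rightarrow> 'n disc4 \<Rightarrow> bool" where
  "disc4_derivs_vanish_at_1 l F = (case F of (h, g, ht, gt) \<Rightarrow>
     (\<forall>i. derivs_vanish_at_1 l (h i)) \<and> derivs_vanish_at_1 l g \<and>
     (\<forall>i. derivs_vanish_at_1 l (ht i)) \<and> derivs_vanish_at_1 l gt)"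

definition disc4_zero :: "'n disc4 \<Rightarrow> bool" where
  "disc4_zero F = (case F of (h, g, ht, gt) \<Rightarrow> \<forall>\<zeta>\<in>cball 0 1.
     (\<forall>i. h i \<zeta> = 0) \<and> g \<zeta> = 0 \<and> (\<forall>i. ht i \<zeta> = 0) \<and> gt \<zeta> = 0)"

end

theory Submission imports Defs "HOL-Complex_Analysis.Complex_Analysis" "HOL-Computational_Algebra.Polynomial" begin

definition DA :: "(complex \<Rightarrow> complex) \<Rightarrow> bool" where
  "DA f \<longleftrightarrow> continuous_on (cball 0 1) f \<and> f holomorphic_on ball 0 1"

lemma unit_cnj: "norm (c::complex) = 1 \<Longrightarrow> cnj c * c = 1"
  by (metis complex_norm_square mult.commute of_real_1 power_one)

lemma lemK_coeff:
  assumes "DA \<phi>" "DA \<psi>" and eq: "\<forall>\<zeta>\<in>sphere 0 1. \<phi> \<zeta> = \<zeta>^N * cnj (\<psi> \<zeta>)" and "k > N"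
  shows "(deriv ^^ k) \<phi> 0 = 0"
proof -
  define j where "j = k - N"
  have j1: "j \<ge> 1" and kj: "k = N + j" using assms(4) by (auto simp: j_def)
  have I1: "((\<lambda>u. \<phi> u / (u - 0) ^ (Suc k)) has_contour_integral ((2 * pi * \<i>) / (fact k) * (deriv ^^ k) \<phi> 0)) (circlepath 0 1)"
    using assms(1) unfolding DA_def
    by (intro Cauchy_has_contour_integral_higher_derivative_circlepath) auto
  have G0: "((\<lambda>u. u^(j-1) * \<psi> u) has_contour_integral 0) (circlepath 0 1)"
  proof (rule Cauchy_theorem_disc[where K="{}" and a=0 and e=1])
    have c: "continuous_on (cball 0 1) \<psi>" and h: "\<psi> holomorphic_on ball 0 1" using assms(2) unfolding DA_def by auto
    show "continuous_on (cball 0 1) (\<lambda>u. u ^ (j - 1) * \<psi> u)"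
      by (intro continuous_on_mult continuous_on_power continuous_on_id c)
    have hh: "(\<lambda>u. u ^ (j - 1) * \<psi> u) holomorphic_on ball 0 1"
      by (intro holomorphic_on_mult holomorphic_on_power holomorphic_on_ident h)
    fix x :: complex assume "x \<in> ball 0 1 - {}"
    then show "(\<lambda>u. u ^ (j - 1) * \<psi> u) field_differentiable at x"
      using holomorphic_on_imp_differentiable_at[OF hh] by simp
  qed (auto simp: path_image_circlepath)
  let ?vd = "\<lambda>x. vector_derivative (circlepath 0 1) (at x within {0..1})"
  have G1: "((\<lambda>x. (circlepath 0 1 x)^(j-1) * \<psi> (circlepath 0 1 x) * ?vd x) has_integral 0) {0..1}"
    using G0 unfolding has_contour_integral_def by simp
  have G2: "((\<lambda>x. - cnj ((circlepath 0 1 x)^(j-1) * \<psi> (circlepath 0 1 x) * ?vd x)) has_integral 0) {0..1}"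
    using G1 has_integral_cnj[of "(\<lambda>x. (circlepath 0 1 x)^(j-1) * \<psi> (circlepath 0 1 x) * ?vd x)" 0 "{0..1}"]
    by (auto simp: o_def dest: has_integral_neg)
  have "((\<lambda>x. \<phi> (circlepath 0 1 x) / (circlepath 0 1 x - 0) ^ Suc k * ?vd x) has_integral 0) {0..1}"
  proof (rule has_integral_eq[OF _ G2])
    fix x :: real assume x: "x \<in> {0..1}"
    define c where "c = circlepath 0 1 x"
    have vd0: "?vd x = 2 * pi * \<i> * complex_of_real 1 * exp(2 * of_real pi * \<i> * x)"
      by (rule vector_derivative_circlepath01) (use x in auto)
    have ce: "c = exp(2 * of_real pi * \<i> * x)" by (simp add: c_def circlepath)
    have vd: "?vd x = 2 * pi * \<i> * c" using vd0 ce by simp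
    have nc: "norm c = 1" by (simp add: c_def circlepath norm_exp_i_times)
    have cc: "cnj c * c = 1" using unit_cnj[OF nc] .
    have c0: "c \<noteq> 0" using nc by auto
    have ph: "\<phi> c = c^N * cnj (\<psi> c)" using eq nc by auto
    have ci: "cnj c = inverse c" using cc c0 by (simp add: field_simps)
    obtain j' where jj: "j = Suc j'" using j1 by (cases j) auto
    have L: "- cnj (c ^ (j - 1) * \<psi> c * ?vd x) = inverse c ^ j * cnj (\<psi> c) * (2 * pi * \<i>)"
      unfolding vd jj by (simp add: ci power_Suc2)
    have p1: "c ^ Suc (N + j) = c^N * c^j * c" by (simp add: power_add)
    have p2: "c^N / (c^N * c^j * c) * c = inverse c ^ j"
      using c0 by (simp add: power_inverse divide_inverse)
    have R: "\<phi> c / (c - 0) ^ Suc k * ?vd x = inverse c ^ j * cnj (\<psi> c) * (2 * pi * \<i>)"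
    proof -
      have "\<phi> c / (c - 0) ^ Suc k * ?vd x = (c^N / (c^N * c^j * c) * c) * cnj (\<psi> c) * (2 * pi * \<i>)"
        unfolding vd ph kj diff_zero p1 by (simp only: divide_inverse mult_ac)
      then show ?thesis using p2 by simp
    qed
    show "- cnj (c ^ (j - 1) * \<psi> c * ?vd x) = \<phi> c / (c - 0) ^ Suc k * ?vd x"
      using L R by simp
  qed
  then have I0: "((\<lambda>u. \<phi> u / (u - 0) ^ (Suc k)) has_contour_integral 0) (circlepath 0 1)"
    unfolding has_contour_integral_def by simp
  have "(2 * pi * \<i>) / (fact k) * (deriv ^^ k) \<phi> 0 = 0"
    using has_contour_integral_unique[OF I1 I0] .
  then show ?thesis by simp
qed

lemma cont_ext_cball:
  fixes f g :: "complex \<Rightarrow> complex"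
  assumes "continuous_on (cball 0 1) f" "continuous_on (cball 0 1) g" "\<forall>w\<in>ball 0 1. f w = g w"
  shows "\<forall>w\<in>cball 0 1. f w = g w"
proof -
  have cl: "closed {x \<in> cball 0 1. (\<lambda>x. f x - g x) x = 0}"
    by (intro continuous_closed_preimage_constant continuous_on_diff assms(1,2)) auto
  have "ball 0 1 \<subseteq> {x \<in> cball 0 1. (\<lambda>x. f x - g x) x = 0}" using assms(3) by auto
  then have "closure (ball (0::complex) 1) \<subseteq> {x \<in> cball 0 1. (\<lambda>x. f x - g x) x = 0}"
    using cl by (rule closure_minimal)
  then show ?thesis by (auto simp: closure_ball)
qed

lemma lemK:
  assumes "DA \<phi>" "DA \<psi>" and eq: "\<forall>\<zeta>\<in>sphere 0 1. \<phi> \<zeta> = \<zeta>^N * cnj (\<psi> \<zeta>)"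
  shows "\<exists>p. degree p \<le> N \<and> (\<forall>w\<in>cball 0 1. \<phi> w = poly p w)"
proof -
  define p where "p = (\<Sum>k\<le>N. monom ((deriv ^^ k) \<phi> 0 / fact k) k)"
  have dp: "degree p \<le> N" unfolding p_def
    by (rule degree_sum_le) (auto intro: order_trans[OF degree_monom_le])
  have "\<forall>w\<in>ball 0 1. \<phi> w = poly p w"
  proof
    fix w :: complex assume w: "w \<in> ball 0 1"
    have s1: "(\<lambda>n. (deriv ^^ n) \<phi> 0 / (fact n) * (w-0)^n) sums \<phi> w"
      using assms(1) w unfolding DA_def by (intro holomorphic_power_series) auto
    have s2: "(\<lambda>n. (deriv ^^ n) \<phi> 0 / (fact n) * (w-0)^n) sums (\<Sum>n\<in>{..N}. (deriv ^^ n) \<phi> 0 / (fact n) * (w-0)^n)"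
      by (rule sums_finite) (auto simp: lemK_coeff[OF assms])
    have "poly p w = (\<Sum>n\<in>{..N}. (deriv ^^ n) \<phi> 0 / (fact n) * (w-0)^n)"
      unfolding p_def by (simp add: poly_sum poly_monom)
    then show "\<phi> w = poly p w" using sums_unique2[OF s1 s2] by simp
  qed
  then have "\<forall>w\<in>cball 0 1. \<phi> w = poly p w"
    using assms(1) unfolding DA_def by (intro cont_ext_cball) (auto intro: continuous_intros)
  then show ?thesis using dp by blast
qed

lemma sphere_swap:
  assumes "\<forall>\<zeta>\<in>sphere 0 1. \<phi> \<zeta> = \<zeta>^N * cnj (\<psi> \<zeta>)"
  shows "\<forall>\<zeta>\<in>sphere 0 1. \<psi> \<zeta> = \<zeta>^N * cnj (\<phi> \<zeta>)"
proof
  fix z :: complex assume z: "z \<in> sphere 0 1"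
  then have "cnj z * z = 1" using unit_cnj by auto
  then have "cnj z ^ N * z ^ N = 1" by (metis power_mult_distrib power_one)
  then show "\<psi> z = z^N * cnj (\<phi> z)" using assms z
    by (auto simp: algebra_simps)
qed

lemma islimpt_S:
  fixes w :: complex
  assumes w1: "norm w \<le> 1" and w2: "dist w 1 < \<rho>" and r: "\<rho> \<le> 1/2"
  shows "w islimpt (cball 0 1 \<inter> ball 1 \<rho>)"
  unfolding islimpt_approachable
proof (intro allI impI)
  fix \<epsilon> :: real assume e: "\<epsilon> > 0"
  define t where "t = min (\<epsilon>/2) ((\<rho> - dist w 1)/2)"
  have t0: "t > 0" using e w2 by (auto simp: t_def)
  have t1: "t < \<epsilon>" "t < \<rho> - dist w 1" using e w2 by (auto simp: t_def min_def)
  have tle: "t \<le> 1" using t1 r w2 zero_le_dist[of w 1] by linarith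
  have wn0: "w \<noteq> 0" using w2 r by (auto simp: dist_norm)
  define y where "y = of_real (1 - t) * w"
  have "norm y = (1 - t) * norm w" unfolding y_def norm_mult norm_of_real using tle by simp
  also have "\<dots> \<le> 1" using tle t0 w1 by (simp add: mult_le_one)
  finally have y1: "norm y \<le> 1" .
  have "dist y 1 = norm ((w - 1) - of_real t * w)" by (simp add: y_def dist_norm algebra_simps)
  also have "\<dots> \<le> norm (w - 1) + norm (of_real t * w)" by (rule norm_triangle_ineq4)
  also have "\<dots> \<le> dist w 1 + t" using t0 w1 by (simp add: dist_norm norm_mult mult_le_one)
  finally have y2: "dist y 1 < \<rho>" using t1 by simp
  have dyw: "dist y w = t * norm w" using t0 by (simp add: y_def dist_norm algebra_simps norm_mult)
  have "y \<noteq> w" using dyw t0 wn0 by auto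
  moreover have "t * norm w \<le> t" using t0 w1 by (simp add: mult_left_le)
  then have "dist y w < \<epsilon>" using dyw t1 by linarith
  ultimately show "\<exists>x'\<in>cball 0 1 \<inter> ball 1 \<rho>. x' \<noteq> w \<and> dist x' w < \<epsilon>"
    using y1 y2 by (intro bexI[of _ y]) (auto simp: dist_commute)
qed

lemma higher_deriv_poly: "(deriv ^^ n) (poly (r::complex poly)) = poly ((pderiv ^^ n) r)"
proof (induction n)
  case 0 then show ?case by simp
next
  case (Suc n)
  have "deriv (poly p) = poly (pderiv p)" for p :: "complex poly"
    by (rule ext, rule DERIV_imp_deriv) simp
  then have "deriv (poly ((pderiv ^^ n) r)) = poly (pderiv ((pderiv ^^ n) r))" by blast
  then show ?case using Suc by simp
qed

lemma pderiv_iter_zero: "n > degree (r :: complex poly) \<Longrightarrow> (pderiv ^^ n) r = 0"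
proof (induction n arbitrary: r)
  case 0 then show ?case by simp
next
  case (Suc n)
  show ?case
  proof (cases "degree r = 0")
    case True
    then have "pderiv r = 0" by (simp add: pderiv_eq_0_iff)
    moreover have "(pderiv ^^ n) 0 = (0::complex poly)" by (induction n) auto
    ultimately show ?thesis by (simp add: funpow_Suc_right del: funpow.simps)
  next
    case False
    then have "n > degree (pderiv r)" using Suc.prems by (simp add: degree_pderiv)
    then show ?thesis using Suc.IH by (simp add: funpow_Suc_right del: funpow.simps)
  qed
qed

lemma derivs_poly_zero:
  assumes dv: "derivs_vanish_at_1 l f" and q1: "poly q 1 \<noteq> 0"
    and eq: "\<forall>w\<in>cball 0 1. poly q w * f w = poly r w" and deg: "degree r \<le> l"
  shows "r = 0"
proof -
  obtain e D where e: "e > 0" and D0: "\<forall>w\<in>cball 0 1 \<inter> ball 1 e. D 0 w = f w"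
    and DD: "\<forall>i<l. \<forall>w\<in>cball 0 1 \<inter> ball 1 e. (Suc i < l \<or> w = 1) \<longrightarrow>
            (D i has_field_derivative D (Suc i) w) (at w within cball 0 1 \<inter> ball 1 e)"
    and Dz: "\<forall>j\<le>l. D j 1 = 0"
    using dv unfolding derivs_vanish_at_1_def by (elim exE conjE) (rule that; assumption)
  have "continuous (at 1) (poly q)" by (intro continuous_intros)
  then obtain \<rho>0 where r0: "\<rho>0 > 0" and rq: "\<forall>w. dist w 1 < \<rho>0 \<longrightarrow> poly q w \<noteq> 0"
    using continuous_at_avoid[of 1 "poly q" 0] q1 by (metis dist_commute)
  define \<rho> where "\<rho> = min \<rho>0 (min e (1/2))"
  have \<rho>: "\<rho> > 0" "\<rho> \<le> \<rho>0" "\<rho> \<le> e" "\<rho> \<le> 1/2" using r0 e by (auto simp: \<rho>_def)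
  define U where "U = ball (1::complex) \<rho>"
  define S' where "S' = cball 0 1 \<inter> U"
  define \<phi> where "\<phi> = (\<lambda>w. poly r w / poly q w)"
  have qU: "\<And>w. w \<in> U \<Longrightarrow> poly q w \<noteq> 0" using rq \<rho> by (auto simp: U_def dist_commute)
  have hol: "\<phi> holomorphic_on U" unfolding \<phi>_def using qU
    by (intro holomorphic_intros) auto
  have oU: "open U" by (simp add: U_def)
  have S'S: "S' \<subseteq> cball 0 1 \<inter> ball 1 e" using \<rho> by (auto simp: S'_def U_def)
  have lim: "at w within S' \<noteq> bot" if "w \<in> S'" for w
  proof -
    have "w islimpt S'" unfolding S'_def U_def
      by (rule islimpt_S) (use that \<rho> in \<open>auto simp: S'_def U_def dist_commute\<close>)
    then show ?thesis using trivial_limit_within by blast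
  qed
  have claim: "\<forall>w\<in>S'. (j < l \<or> w = 1) \<longrightarrow> D j w = (deriv ^^ j) \<phi> w" if "j \<le> l" for j
    using that
  proof (induction j)
    case 0
    show ?case
    proof (intro ballI impI)
      fix w assume w: "w \<in> S'"
      then have qw: "poly q w \<noteq> 0" using qU by (auto simp: S'_def)
      have w1: "w \<in> cball 0 1 \<inter> ball 1 e" "w \<in> cball 0 1" using w S'S by auto
      have "poly q w * f w = poly r w" using eq w1 by blast
      then have "f w = poly r w / poly q w" using qw by (simp add: eq_divide_eq mult.commute)
      moreover have "D 0 w = f w" using D0 w1 by blast
      ultimately show "D 0 w = (deriv ^^ 0) \<phi> w" by (simp add: \<phi>_def)
    qed
  next
    case (Suc j)
    have IH: "\<forall>w\<in>S'. D j w = (deriv ^^ j) \<phi> w" using Suc by auto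
    show ?case
    proof (intro ballI impI)
      fix w assume w: "w \<in> S'" and c: "Suc j < l \<or> w = 1"
      have "(D j has_field_derivative D (Suc j) w) (at w within cball 0 1 \<inter> ball 1 e)"
      proof -
        have jl: "j < l" using Suc.prems by simp
        have wS: "w \<in> cball 0 1 \<inter> ball 1 e" using w S'S by blast
        show ?thesis using DD jl wS c by blast
      qed
      then have "(D j has_field_derivative D (Suc j) w) (at w within S')"
        using DERIV_subset S'S by blast
      then have d1: "((deriv ^^ j) \<phi> has_field_derivative D (Suc j) w) (at w within S')"
        by (rule has_field_derivative_transform_within[where d=1]) (use w IH in auto)
      have wU: "w \<in> U" using w by (auto simp: S'_def)
      have d2: "((deriv ^^ j) \<phi> has_field_derivative deriv ((deriv ^^ j) \<phi>) w) (at w within S')"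
        by (rule holomorphic_derivI[OF holomorphic_higher_deriv[OF hol oU] oU wU])
      have "D (Suc j) w = deriv ((deriv ^^ j) \<phi>) w"
        using has_field_derivative_unique[OF d1 d2 lim[OF w]] .
      then show "D (Suc j) w = (deriv ^^ Suc j) \<phi> w" by simp
    qed
  qed
  have one: "1 \<in> S'" using \<rho> by (auto simp: S'_def U_def)
  have phz: "(deriv ^^ j) \<phi> 1 = 0" if "j \<le> l" for j
    using claim[OF that] one Dz that by auto
  have rz: "(deriv ^^ j) (poly r) 1 = 0" if "j \<le> l" for j
  proof -
    have ev: "eventually (\<lambda>w. poly r w = poly q w * \<phi> w) (nhds 1)"
    proof -
      have "eventually (\<lambda>w. w \<in> U) (nhds 1)" using oU \<rho> by (intro eventually_nhds_in_open) (auto simp: U_def)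
      then show ?thesis by eventually_elim (use qU in \<open>auto simp: \<phi>_def\<close>)
    qed
    have "(deriv ^^ j) (poly r) 1 = (deriv ^^ j) (\<lambda>w. poly q w * \<phi> w) 1"
      by (rule higher_deriv_cong_ev[OF ev refl])
    also have "\<dots> = (\<Sum>i = 0..j. of_nat (j choose i) * (deriv ^^ i) (poly q) 1 * (deriv ^^ (j-i)) \<phi> 1)"
      by (rule higher_deriv_mult[OF _ hol oU]) (auto intro: holomorphic_intros simp: U_def \<rho>)
    also have "\<dots> = 0" using phz that by (intro sum.neutral) auto
    finally show ?thesis .
  qed
  have "poly r w = 0" for w
  proof -
    have "poly r holomorphic_on ball 1 (norm (w - 1) + 1)" by (intro holomorphic_intros)
    then have s1: "(\<lambda>n. (deriv ^^ n) (poly r) 1 / (fact n) * (w-1)^n) sums poly r w"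
      by (rule holomorphic_power_series) (simp add: dist_norm norm_minus_commute)
    have "(deriv ^^ n) (poly r) 1 = 0" for n
    proof (cases "n \<le> l")
      case True then show ?thesis using rz by auto
    next
      case False
      then show ?thesis using deg by (simp add: higher_deriv_poly pderiv_iter_zero)
    qed
    then have "(\<lambda>n. (deriv ^^ n) (poly r) 1 / (fact n) * (w-1)^n) = (\<lambda>n. 0)" by auto
    then show ?thesis using s1 sums_zero sums_unique2 by metis
  qed
  then show ?thesis using poly_all_0_iff_0 by blast
qed


lemma poly_mult_zero_cball:
  fixes f :: "complex \<Rightarrow> complex"
  assumes c: "continuous_on (cball 0 1) f" and q: "q \<noteq> 0"
    and eq: "\<forall>w\<in>cball 0 1. poly q w * f w = 0"
  shows "\<forall>w\<in>cball 0 1. f w = 0"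
proof
  fix w :: complex assume w: "w \<in> cball 0 1"
  define Z where "Z = {x. poly q x = 0}"
  have fZ: "finite Z" using poly_roots_finite[OF q] by (simp add: Z_def)
  have "w islimpt ball 0 1" using w by (simp add: islimpt_ball)
  then have "w islimpt (Z \<union> (ball 0 1 - Z))" by (rule islimpt_subset) auto
  then have l: "w islimpt (ball 0 1 - Z)" using islimpt_Un_finite[OF fZ] by blast
  have cl: "closed {x \<in> cball 0 1. f x = 0}"
    by (intro continuous_closed_preimage_constant c) auto
  have sub: "ball 0 1 - Z \<subseteq> {x \<in> cball 0 1. f x = 0}" using eq by (auto simp: Z_def)
  have "w \<in> closure (ball 0 1 - Z)" using l by (simp add: closure_def)
  then show "f w = 0" using closure_minimal[OF sub cl] by blast
qed


section \<open>Derivatives of the monomials\<close>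

definition monoD :: "('n::finite \<Rightarrow> nat) \<Rightarrow> ('n \<Rightarrow> complex) \<Rightarrow> ('n \<Rightarrow> complex) \<Rightarrow> complex" where
  "monoD K c e = (\<Sum>j\<in>UNIV. dmono K j c * e j)"

definition dPz :: "('n::finite \<Rightarrow> nat) \<Rightarrow> nat \<Rightarrow> (('n \<Rightarrow> nat) \<Rightarrow> ('n \<Rightarrow> nat) \<Rightarrow> complex)
    \<Rightarrow> 'n \<Rightarrow> ('n \<Rightarrow> complex) \<Rightarrow> ('n \<Rightarrow> complex) \<Rightarrow> ('n \<Rightarrow> complex) \<Rightarrow> ('n \<Rightarrow> complex) \<Rightarrow> complex" where
  "dPz M d \<alpha> i a b c e = (\<Sum>(J, K)\<in>idx M d. \<alpha> J K *
      (of_nat (J i) * monoD (J(i := J i - 1)) a b * mono K c + dmono J i a * monoD K c e))"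

lemma dmono_alt: "dmono J i z = of_nat (J i) * mono (J(i := J i - 1)) z"
  unfolding dmono_def mono_def by (intro arg_cong2[where f="(*)"] refl prod.cong) auto

lemma prod_remove_if:
  fixes c :: "'n::finite \<Rightarrow> complex"
  shows "(\<Prod>l\<in>UNIV. c l ^ (if l = j then K l - 1 else K l)) = c j ^ (K j - 1) * (\<Prod>l\<in>UNIV - {j}. c l ^ K l)"
proof -
  have "(\<Prod>l\<in>UNIV. c l ^ (if l = j then K l - 1 else K l)) =
        c j ^ (K j - 1) * (\<Prod>l\<in>UNIV - {j}. c l ^ (if l = j then K l - 1 else K l))"
    by (subst prod.remove[of UNIV j]) auto
  also have "(\<Prod>l\<in>UNIV - {j}. c l ^ (if l = j then K l - 1 else K l)) = (\<Prod>l\<in>UNIV - {j}. c l ^ K l)"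
    by (intro prod.cong) auto
  finally show ?thesis .
qed

lemma mono_line_deriv:
  "((\<lambda>s. mono K (\<lambda>l. c l + s * e l)) has_field_derivative monoD K c e) (at 0)"
proof -
  have d: "((\<lambda>s. (c l + s * e l) ^ K l) has_field_derivative (of_nat (K l) * c l ^ (K l - 1) * e l)) (at 0)" for l
    by (auto intro!: derivative_eq_intros)
  have "((\<lambda>s. \<Prod>l\<in>UNIV. (c l + s * e l) ^ K l) has_field_derivative
        (\<Sum>l\<in>UNIV. (of_nat (K l) * c l ^ (K l - 1) * e l) * (\<Prod>y\<in>UNIV-{l}. (c y + 0 * e y) ^ K y))) (at 0)"
    by (rule has_field_derivative_prod) (rule d)
  moreover have "(\<Sum>l\<in>UNIV. (of_nat (K l) * c l ^ (K l - 1) * e l) * (\<Prod>y\<in>UNIV-{l}. (c y + 0 * e y) ^ K y)) = monoD K c e"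
    unfolding monoD_def dmono_def prod_remove_if by (intro sum.cong) auto
  ultimately show ?thesis unfolding mono_def by simp
qed

lemma dmono_line_deriv:
  "((\<lambda>s. dmono J i (\<lambda>l. c l + s * e l)) has_field_derivative
      of_nat (J i) * monoD (J(i := J i - 1)) c e) (at 0)"
  unfolding dmono_alt by (intro DERIV_cmult mono_line_deriv)

lemma Pz_line_deriv:
  "((\<lambda>s. Pz M d \<alpha> i (\<lambda>l. a l + s * b l) (\<lambda>l. c l + s * e l)) has_field_derivative
      dPz M d \<alpha> i a b c e) (at 0)"
  unfolding Pz_def dPz_def
proof (rule DERIV_sum)
  fix p assume "p \<in> idx M d"
  obtain J K where p: "p = (J, K)" by (cases p)
  have m: "((\<lambda>s. dmono J i (\<lambda>l. a l + s * b l) * mono K (\<lambda>l. c l + s * e l)) has_field_derivative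
     (of_nat (J i) * monoD (J(i := J i - 1)) a b * mono K (\<lambda>l. c l + 0 * e l) +
        monoD K c e * dmono J i (\<lambda>l. a l + 0 * b l))) (at 0)"
    by (rule DERIV_mult[OF dmono_line_deriv[of J i a b] mono_line_deriv[of K c e]])
  have "((\<lambda>s. \<alpha> J K * (dmono J i (\<lambda>l. a l + s * b l) * mono K (\<lambda>l. c l + s * e l))) has_field_derivative
     \<alpha> J K * (of_nat (J i) * monoD (J(i := J i - 1)) a b * mono K (\<lambda>l. c l + 0 * e l) +
        monoD K c e * dmono J i (\<lambda>l. a l + 0 * b l))) (at 0)"
    by (rule DERIV_cmult[OF m])
  then show "((\<lambda>x. case p of (J, K) \<Rightarrow> \<alpha> J K * dmono J i (\<lambda>l. a l + x * b l) * mono K (\<lambda>l. c l + x * e l)) has_field_derivative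
         (case p of (J, K) \<Rightarrow> \<alpha> J K * (of_nat (J i) * monoD (J(i := J i - 1)) a b * mono K c + dmono J i a * monoD K c e))) (at 0)"
    by (simp add: p mult.assoc mult.commute mult.left_commute)
qed

lemma deriv_re_im_zero:
  assumes d: "(Zc has_field_derivative Z') (at 0)"
    and r: "((\<lambda>t. 2 * Re (Zc (of_real t))) has_real_derivative 0) (at 0)"
    and i: "((\<lambda>t. - 2 * Im (Zc (of_real t))) has_real_derivative 0) (at 0)"
  shows "Z' = 0"
proof -
  have v: "((\<lambda>t. Zc (of_real t)) has_vector_derivative Z') (at (0::real))"
    by (rule has_vector_derivative_real_field) (use d in simp)
  have r2: "((\<lambda>t. 2 * Re (Zc (of_real t))) has_real_derivative 2 * Re Z') (at 0)"
    by (intro DERIV_cmult has_field_derivative_Re v)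
  have i2: "((\<lambda>t. - 2 * Im (Zc (of_real t))) has_real_derivative - 2 * Im Z') (at 0)"
    by (intro DERIV_cmult has_field_derivative_Im v)
  have "2 * Re Z' = 0" using DERIV_unique[OF r2 r] .
  moreover have "- 2 * Im Z' = 0" using DERIV_unique[OF i2 i] .
  ultimately show ?thesis by (simp add: complex_eq_iff)
qed

lemma deriv_re_zero:
  assumes d: "(Zc has_field_derivative Z') (at 0)"
    and r: "((\<lambda>t. Re (Zc (of_real t))) has_real_derivative 0) (at 0)"
  shows "Re Z' = 0"
proof -
  have v: "((\<lambda>t. Zc (of_real t)) has_vector_derivative Z') (at (0::real))"
    by (rule has_vector_derivative_real_field) (use d in simp)
  have r2: "((\<lambda>t. Re (Zc (of_real t))) has_real_derivative Re Z') (at 0)"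
    by (intro has_field_derivative_Re v)
  show ?thesis using DERIV_unique[OF r2 r] .
qed


section \<open>Weighted homogeneity\<close>

definition sc :: "complex \<Rightarrow> ('n \<Rightarrow> nat) \<Rightarrow> ('n \<Rightarrow> complex) \<Rightarrow> ('n \<Rightarrow> complex)" where
  "sc s M y = (\<lambda>l. s ^ M l * y l)"

lemma mono_sc: "mono K (sc s M y) = s ^ Mdot M K * mono K (y::'n::finite \<Rightarrow> complex)"
proof -
  have "mono K (sc s M y) = (\<Prod>l\<in>UNIV. s ^ (M l * K l) * y l ^ K l)"
    unfolding mono_def sc_def by (simp add: power_mult_distrib power_mult)
  also have "\<dots> = (\<Prod>l\<in>UNIV. s ^ (M l * K l)) * (\<Prod>l\<in>UNIV. y l ^ K l)"
    by (rule prod.distrib)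
  also have "(\<Prod>l\<in>UNIV. s ^ (M l * K l)) = s ^ Mdot M K"
    unfolding Mdot_def by (simp add: power_sum)
  finally show ?thesis unfolding mono_def by simp
qed

lemma Mdot_split: "Mdot M J = M i * J i + (\<Sum>l\<in>UNIV - {i}. M l * J (l::'n::finite))"
  unfolding Mdot_def by (subst sum.remove[of UNIV i]) auto

lemma Mdot_upd:
  assumes "J i \<ge> 1"
  shows "Mdot M (J(i := J i - 1)) = Mdot M J - M (i::'n::finite)"
proof -
  have r: "(\<Sum>l\<in>UNIV - {i}. M l * (J(i := J i - 1)) l) = (\<Sum>l\<in>UNIV - {i}. M l * J l)"
    by (intro sum.cong) auto
  obtain k where k: "J i = Suc k" using assms by (cases "J i") auto
  have "M i * (J i - 1) + M i = M i * J i" unfolding k by simp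
  then show ?thesis using Mdot_split[of M "J(i := J i - 1)" i] Mdot_split[of M J i] r by simp
qed

lemma Mdot_ge:
  assumes "K j \<ge> 1"
  shows "M j \<le> Mdot M (K::'n::finite \<Rightarrow> nat)"
proof -
  have "M j \<le> M j * K j" using assms by simp
  also have "\<dots> \<le> Mdot M K" unfolding Mdot_def by (rule member_le_sum) auto
  finally show ?thesis .
qed

lemma dmono_zero: "J i = 0 \<Longrightarrow> dmono J i z = 0"
  by (simp add: dmono_def)

lemma dmono_sc: "dmono J i (sc s M y) = s ^ (Mdot M J - M i) * dmono J i (y::'n::finite \<Rightarrow> complex)"
proof (cases "J i = 0")
  case True then show ?thesis by (simp add: dmono_zero)
next
  case False
  then show ?thesis unfolding dmono_alt mono_sc using Mdot_upd[of J i M] by simp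
qed

lemma monoD_sc: "monoD K (sc s M y) (sc s M e) = s ^ Mdot M K * monoD K y (e::'n::finite \<Rightarrow> complex)"
  unfolding monoD_def sum_distrib_left
proof (rule sum.cong[OF refl])
  fix j
  show "dmono K j (sc s M y) * sc s M e j = s ^ Mdot M K * (dmono K j y * e j)"
  proof (cases "K j = 0")
    case True then show ?thesis by (simp add: dmono_zero)
  next
    case False
    then have "M j \<le> Mdot M K" by (intro Mdot_ge) auto
    then have "s ^ (Mdot M K - M j) * s ^ M j = s ^ Mdot M K" by (simp add: power_add[symmetric])
    have "dmono K j (sc s M y) * sc s M e j = (s ^ (Mdot M K - M j) * s ^ M j) * (dmono K j y * e j)"
    proof -
      have e1: "dmono K j (sc s M y) = s ^ (Mdot M K - M j) * dmono K j y" by (rule dmono_sc)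
      have e2: "sc s M e j = s ^ M j * e j" by (simp add: sc_def)
      show ?thesis unfolding e1 e2 by (simp only: mult_ac)
    qed
    then show ?thesis using \<open>s ^ (Mdot M K - M j) * s ^ M j = s ^ Mdot M K\<close> by simp
  qed
qed

lemma monoD_zero: "monoD K c (\<lambda>_. 0) = 0"
  by (simp add: monoD_def)


definition Einner :: "('n::finite \<Rightarrow> nat) \<Rightarrow> nat \<Rightarrow> (('n \<Rightarrow> nat) \<Rightarrow> ('n \<Rightarrow> nat) \<Rightarrow> complex)
    \<Rightarrow> 'n \<Rightarrow> complex \<Rightarrow> ('n \<Rightarrow> complex) \<Rightarrow> ('n \<Rightarrow> complex) \<Rightarrow> ('n \<Rightarrow> complex) \<Rightarrow> ('n \<Rightarrow> complex) \<Rightarrow> complex" where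
  "Einner M d \<alpha> i u a b c e = (\<Sum>(J, K)\<in>idx M d. \<alpha> J K * u ^ Mdot M K *
      (of_nat (J i) * monoD (J(i := J i - 1)) a b * mono K c + dmono J i a * monoD K c e))"

lemma dPz_term:
  assumes dd: "Mdot M J + Mdot M K = d"
  shows "\<alpha> J K * (of_nat (J i) * monoD (J(i := J i - 1)) (sc s M a) (sc s M b) * mono K (sc (s * u) M c) +
           dmono J i (sc s M a) * monoD K (sc (s * u) M c) (sc (s * u) M e)) =
        s ^ (d - M i) * (\<alpha> J K * u ^ Mdot M K *
           (of_nat (J i) * monoD (J(i := J i - 1)) a b * mono K c + dmono J i a * monoD K c (e::'n::finite \<Rightarrow> complex)))"
proof (cases "J i = 0")
  case True
  then show ?thesis by (simp add: dmono_zero)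
next
  case False
  let ?J' = "J(i := J i - 1)"
  have Ji: "J i \<ge> 1" using False by simp
  have A: "monoD ?J' (sc s M a) (sc s M b) = s ^ (Mdot M J - M i) * monoD ?J' a b"
    unfolding monoD_sc Mdot_upd[of J i M, OF Ji] ..
  have C: "dmono J i (sc s M a) = s ^ (Mdot M J - M i) * dmono J i a" by (rule dmono_sc)
  have ge: "M i \<le> Mdot M J" using Mdot_ge[of J i M, OF Ji] .
  have E: "s ^ (Mdot M J - M i) * (s * u) ^ Mdot M K = s ^ (d - M i) * u ^ Mdot M K"
  proof -
    have "Mdot M J - M i + Mdot M K = d - M i" using dd ge by linarith
    then show ?thesis by (simp add: power_mult_distrib power_add[symmetric] mult.assoc)
  qed
  have "\<alpha> J K * (of_nat (J i) * monoD ?J' (sc s M a) (sc s M b) * mono K (sc (s * u) M c) +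
         dmono J i (sc s M a) * monoD K (sc (s * u) M c) (sc (s * u) M e)) =
        (s ^ (Mdot M J - M i) * (s * u) ^ Mdot M K) * (\<alpha> J K *
         (of_nat (J i) * monoD ?J' a b * mono K c + dmono J i a * monoD K c e))"
    unfolding A C mono_sc monoD_sc using Mdot_upd[of J i M, OF Ji] by (simp add: algebra_simps)
  also have "\<dots> = s ^ (d - M i) * (\<alpha> J K * u ^ Mdot M K *
         (of_nat (J i) * monoD ?J' a b * mono K c + dmono J i a * monoD K c e))"
    unfolding E by (simp add: algebra_simps)
  finally show ?thesis .
qed

lemma dPz_hom:
  "dPz M d \<alpha> i (sc s M a) (sc s M b) (sc (s*u) M c) (sc (s*u) M e) = s ^ (d - M i) * Einner M d \<alpha> i u a b c e"
  unfolding dPz_def Einner_def sum_distrib_left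
  apply (rule sum.cong[OF refl])
  subgoal for x
    apply (cases x)
    apply hypsubst
    apply (simp only: prod.case)
    apply (rule dPz_term)
    apply (simp add: idx_def)
    done
  done


section \<open>Polynomial coefficient matrices\<close>

lemma pow_neg_inv:
  fixes z :: complex
  assumes "z \<noteq> 0" "n \<le> k"
  shows "z ^ k * (-1 / z) ^ n = (-1) ^ n * z ^ (k - n)"
proof -
  have zk: "z ^ k = z ^ (k - n) * z ^ n" using assms(2) by (simp add: power_add[symmetric])
  have "z * (-1 / z) = -1" using assms(1) by simp
  then have "z ^ n * (-1 / z) ^ n = (-1) ^ n" by (metis power_mult_distrib)
  then show ?thesis unfolding zk by (metis mult.assoc mult.commute)
qed

definition pQ :: "('n::finite \<Rightarrow> nat) \<Rightarrow> nat \<Rightarrow> (('n \<Rightarrow> nat) \<Rightarrow> ('n \<Rightarrow> nat) \<Rightarrow> complex)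
    \<Rightarrow> ('n \<Rightarrow> complex) \<Rightarrow> nat \<Rightarrow> 'n \<Rightarrow> 'n \<Rightarrow> complex poly" where
  "pQ M d \<alpha> v k i j = (\<Sum>(J, K)\<in>idx M d.
     monom (\<alpha> J K * dmono J i v * dmono K j (\<lambda>l. cnj (v l)) * (-1) ^ (Mdot M K - M j)) (k - (Mdot M K - M j)))"

definition pR :: "('n::finite \<Rightarrow> nat) \<Rightarrow> nat \<Rightarrow> (('n \<Rightarrow> nat) \<Rightarrow> ('n \<Rightarrow> nat) \<Rightarrow> complex)
    \<Rightarrow> ('n \<Rightarrow> complex) \<Rightarrow> nat \<Rightarrow> 'n \<Rightarrow> 'n \<Rightarrow> complex poly" where
  "pR M d \<alpha> v k i j = (\<Sum>(J, K)\<in>idx M d.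
     monom (\<alpha> J K * of_nat (J i) * dmono (J(i := J i - 1)) j v * mono K (\<lambda>l. cnj (v l)) * (-1) ^ Mdot M K) (k - Mdot M K))"

lemma finite_idx:
  fixes M :: "'n::finite \<Rightarrow> nat"
  assumes "\<forall>i. M i > 0"
  shows "finite (idx M d)"
proof -
  have "idx M d \<subseteq> (PiE UNIV (\<lambda>_. {..d})) \<times> (PiE UNIV (\<lambda>_. {..d}))"
  proof
    fix p assume p: "p \<in> idx M d"
    obtain J K where pJK: "p = (J, K)" by (cases p)
    have s: "Mdot M J + Mdot M K = d" using p by (simp add: pJK idx_def)
    have "J i \<le> d" for i
    proof -
      have "J i \<le> M i * J i" using assms by (auto simp: Suc_le_eq)
      also have "\<dots> \<le> Mdot M J" unfolding Mdot_def by (rule member_le_sum) auto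
      finally show ?thesis using s by linarith
    qed
    moreover have "K i \<le> d" for i
    proof -
      have "K i \<le> M i * K i" using assms by (auto simp: Suc_le_eq)
      also have "\<dots> \<le> Mdot M K" unfolding Mdot_def by (rule member_le_sum) auto
      finally show ?thesis using s by linarith
    qed
    ultimately show "p \<in> (PiE UNIV (\<lambda>_. {..d})) \<times> (PiE UNIV (\<lambda>_. {..d}))"
      by (auto simp: pJK PiE_def extensional_def)
  qed
  moreover have "finite ((PiE (UNIV::'n set) (\<lambda>_. {..d})) \<times> (PiE (UNIV::'n set) (\<lambda>_. {..d})))"
    by (intro finite_cartesian_product finite_PiE) auto
  ultimately show ?thesis by (rule finite_subset)
qed

lemma degree_pQ:
  assumes "\<forall>i. M i > 0"
  shows "degree (pQ M d \<alpha> v k i j) \<le> k"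
  unfolding pQ_def
  by (rule degree_sum_le[OF finite_idx[OF assms]]) (auto intro: order_trans[OF degree_monom_le])

lemma sc_fold_Q: "(\<lambda>l. (-1 / z) ^ M l * cnj (v l)) = sc (-1 / z) M (\<lambda>l. cnj (v l))" by (simp add: sc_def)

lemma pQ_eval:
  assumes z: "z \<noteq> 0" and supp: "\<forall>J K. \<alpha> J K \<noteq> 0 \<longrightarrow> Mdot M K \<le> kzero M d \<alpha>"
  shows "poly (pQ M d \<alpha> v (kzero M d \<alpha>) i j) z = Qv_entry M d \<alpha> v i j z"
  unfolding pQ_def Qv_entry_def Pzw_def poly_sum sc_fold_Q sum_distrib_left
  apply (rule sum.cong[OF refl])
  subgoal for x
    apply (cases x)
    apply hypsubst
    apply (simp only: prod.case poly_monom dmono_sc)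
  proof -
    fix J K
    show "\<alpha> J K * dmono J i v * dmono K j (\<lambda>l. cnj (v l)) * (-1) ^ (Mdot M K - M j) * z ^ (kzero M d \<alpha> - (Mdot M K - M j)) =
          z ^ kzero M d \<alpha> * (\<alpha> J K * dmono J i v * ((-1 / z) ^ (Mdot M K - M j) * dmono K j (\<lambda>l. cnj (v l))))"
    proof (cases "\<alpha> J K = 0")
      case True then show ?thesis by simp
    next
      case False
      then have "Mdot M K - M j \<le> kzero M d \<alpha>" using supp by fastforce
      then have "z ^ kzero M d \<alpha> * (-1 / z) ^ (Mdot M K - M j) = (-1) ^ (Mdot M K - M j) * z ^ (kzero M d \<alpha> - (Mdot M K - M j))"
        using pow_neg_inv[OF z] by blast
      then show ?thesis by (simp add: algebra_simps)
    qed
  qed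
  done


lemma Einner_identity:
  fixes z :: complex
  assumes z: "z \<noteq> 0" and supp: "\<forall>J K. \<alpha> J K \<noteq> 0 \<longrightarrow> Mdot M K \<le> kzero M d \<alpha>"
  shows "z ^ kzero M d \<alpha> * Einner M d \<alpha> i (-1/z) v f (\<lambda>l. cnj (v l)) e =
         (\<Sum>j\<in>UNIV. poly (pR M d \<alpha> v (kzero M d \<alpha>) i j) z * f j) +
         (\<Sum>j\<in>UNIV. Qv_entry M d \<alpha> v i j z * ((-1/z) ^ (M j) * e j))"
proof -
  define k0 where "k0 = kzero M d \<alpha>"
  define u where "u = -1/z"
  define vb where "vb = (\<lambda>l. cnj (v l))"
  define T1 where "T1 = (\<lambda>p j. case p of (J, K) \<Rightarrow> z ^ k0 * \<alpha> J K * u ^ Mdot M K * of_nat (J i) *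
        dmono (J(i := J i - 1)) j v * mono K vb * f j)"
  define T2 where "T2 = (\<lambda>p j. case p of (J, K) \<Rightarrow> z ^ k0 * \<alpha> J K * u ^ Mdot M K *
        dmono J i v * dmono K j vb * e j)"
  have a: "z ^ k0 * Einner M d \<alpha> i u v f vb e = (\<Sum>p\<in>idx M d. (\<Sum>j\<in>UNIV. T1 p j) + (\<Sum>j\<in>UNIV. T2 p j))"
    unfolding Einner_def monoD_def sum_distrib_left
    apply (rule sum.cong[OF refl])
    subgoal for x
      apply (cases x)
      apply hypsubst
      apply (simp only: prod.case T1_def T2_def)
      apply (simp add: sum_distrib_left sum_distrib_right algebra_simps)
      done
    done
  have b: "(\<Sum>p\<in>idx M d. (\<Sum>j\<in>UNIV. T1 p j) + (\<Sum>j\<in>UNIV. T2 p j)) =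
           (\<Sum>j\<in>UNIV. \<Sum>p\<in>idx M d. T1 p j) + (\<Sum>j\<in>UNIV. \<Sum>p\<in>idx M d. T2 p j)"
    by (simp add: sum.distrib sum.swap[of _ "idx M d"])
  have c: "poly (pR M d \<alpha> v k0 i j) z * f j = (\<Sum>p\<in>idx M d. T1 p j)" for j
    unfolding pR_def poly_sum sum_distrib_right
    apply (rule sum.cong[OF refl])
    subgoal for x
      apply (cases x)
      apply hypsubst
      apply (simp only: prod.case T1_def poly_monom)
    proof -
      fix J K
      show "\<alpha> J K * of_nat (J i) * dmono (J(i := J i - 1)) j v * mono K (\<lambda>l. cnj (v l)) * (-1) ^ Mdot M K *
              z ^ (k0 - Mdot M K) * f j =
            z ^ k0 * \<alpha> J K * u ^ Mdot M K * of_nat (J i) * dmono (J(i := J i - 1)) j v * mono K vb * f j"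
      proof (cases "\<alpha> J K = 0")
        case True then show ?thesis by simp
      next
        case False
        then have "Mdot M K \<le> k0" using supp by (auto simp: k0_def)
        then have "z ^ k0 * u ^ Mdot M K = (-1) ^ Mdot M K * z ^ (k0 - Mdot M K)"
          unfolding u_def by (rule pow_neg_inv[OF z])
        then show ?thesis unfolding vb_def by (simp add: algebra_simps)
      qed
    qed
    done
  have dd: "Qv_entry M d \<alpha> v i j z * (u ^ (M j) * e j) = (\<Sum>p\<in>idx M d. T2 p j)" for j
    unfolding Qv_entry_def Pzw_def sc_fold_Q sum_distrib_left sum_distrib_right
    apply (rule sum.cong[OF refl])
    subgoal for x
      apply (cases x)
      apply hypsubst
      apply (simp only: prod.case T2_def dmono_sc)
    proof -
      fix J K
      show "z ^ kzero M d \<alpha> * (\<alpha> J K * dmono J i v * ((-1 / z) ^ (Mdot M K - M j) * dmono K j (\<lambda>l. cnj (v l)))) *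
              (u ^ M j * e j) =
            z ^ k0 * \<alpha> J K * u ^ Mdot M K * dmono J i v * dmono K j vb * e j"
      proof (cases "K j = 0")
        case True then show ?thesis by (simp add: dmono_zero)
      next
        case False
        then have "M j \<le> Mdot M K" by (intro Mdot_ge) auto
        then have "u ^ (Mdot M K - M j) * u ^ M j = u ^ Mdot M K" by (simp add: power_add[symmetric])
        then show ?thesis unfolding vb_def k0_def u_def[symmetric] by (simp add: algebra_simps)
      qed
    qed
    done
  show ?thesis
    unfolding k0_def[symmetric] u_def[symmetric] vb_def[symmetric] a b c dd ..
qed


section \<open>Disc algebra closure\<close>

lemma DA_const: "DA (\<lambda>_. c)"
  unfolding DA_def by (auto intro: continuous_intros holomorphic_intros)

lemma DA_poly: "DA (poly p)"
  unfolding DA_def by (auto intro: continuous_intros holomorphic_intros)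

lemma DA_add: "DA f \<Longrightarrow> DA g \<Longrightarrow> DA (\<lambda>w. f w + g w)"
  unfolding DA_def by (auto intro: continuous_on_add holomorphic_on_add)

lemma DA_diff: "DA f \<Longrightarrow> DA g \<Longrightarrow> DA (\<lambda>w. f w - g w)"
  unfolding DA_def by (auto intro: continuous_on_diff holomorphic_on_diff)

lemma DA_mult: "DA f \<Longrightarrow> DA g \<Longrightarrow> DA (\<lambda>w. f w * g w)"
  unfolding DA_def by (auto intro: continuous_on_mult holomorphic_on_mult)

lemma DA_sum: "(\<And>i. i \<in> I \<Longrightarrow> DA (f i)) \<Longrightarrow> DA (\<lambda>w. \<Sum>i\<in>I. f i w)"
  unfolding DA_def by (auto intro!: continuous_on_sum holomorphic_on_sum)

lemma DA_prod: "(\<And>i. i \<in> I \<Longrightarrow> DA (f i)) \<Longrightarrow> DA (\<lambda>w. \<Prod>i\<in>I. f i w)"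
  unfolding DA_def by (auto intro!: continuous_on_prod holomorphic_on_prod)

lemma DA_pow: "DA (\<lambda>w. w ^ n)"
  unfolding DA_def by (auto intro: continuous_intros holomorphic_intros)

lemma DA_det:
  assumes "\<And>i j. DA (E i j)"
  shows "DA (\<lambda>w. det (\<chi> i j. E i j w :: complex^'n::finite^'n))"
proof -
  have "(\<lambda>w. det (\<chi> i j. E i j w :: complex^'n^'n)) =
        (\<lambda>w. \<Sum>p\<in>{p. p permutes (UNIV::'n set)}. of_int (sign p) * (\<Prod>i\<in>UNIV. E i (p i) w))"
    by (simp add: det_def)
  moreover have "DA (\<lambda>w. \<Sum>p\<in>{p. p permutes (UNIV::'n set)}. of_int (sign p) * (\<Prod>i\<in>UNIV. E i (p i) w))"
    by (intro DA_sum DA_mult DA_const DA_prod assms)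
  ultimately show ?thesis by simp
qed

lemma det_poly:
  fixes Pm :: "'n::finite \<Rightarrow> 'n \<Rightarrow> complex poly"
  assumes "\<And>i j. degree (Pm i j) \<le> k"
  shows "\<exists>P. degree P \<le> CARD('n) * k \<and> (\<forall>z. poly P z = det (\<chi> i j. poly (Pm i j) z :: complex^'n^'n))"
proof -
  define P where "P = (\<Sum>p\<in>{p. p permutes (UNIV::'n set)}. smult (of_int (sign p)) (\<Prod>i\<in>UNIV. Pm i (p i)))"
  have "poly P z = det (\<chi> i j. poly (Pm i j) z :: complex^'n^'n)" for z
    by (simp add: P_def det_def poly_sum poly_prod)
  moreover have "degree P \<le> CARD('n) * k"
    unfolding P_def
  proof (rule degree_sum_le)
    show "finite {p. p permutes (UNIV::'n set)}" by (rule finite_permutations) simp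
    fix p assume "p \<in> {p. p permutes (UNIV::'n set)}"
    have "degree (\<Prod>i\<in>UNIV. Pm i (p i)) \<le> (\<Sum>i\<in>UNIV. degree (Pm i (p i)))"
      using degree_prod_sum_le[of UNIV "\<lambda>i. Pm i (p i)"] by (simp add: o_def)
    also have "\<dots> \<le> (\<Sum>i\<in>(UNIV::'n set). k)" by (intro sum_mono assms)
    also have "\<dots> = CARD('n) * k" by simp
    finally show "degree (smult (of_int (sign p)) (\<Prod>i\<in>UNIV. Pm i (p i))) \<le> CARD('n) * k"
      using degree_smult_le order_trans by blast
  qed
  ultimately show ?thesis by blast
qed

definition pstar :: "nat \<Rightarrow> complex poly \<Rightarrow> complex poly" where
  "pstar N P = (\<Sum>k\<le>N. monom (cnj (coeff P k)) (N - k))"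

lemma poly_upto:
  fixes P :: "complex poly"
  assumes "degree P \<le> N"
  shows "poly P z = (\<Sum>k\<le>N. coeff P k * z ^ k)"
proof -
  have "poly P z = (\<Sum>k\<le>degree P. coeff P k * z ^ k)" by (rule poly_altdef)
  also have "\<dots> = (\<Sum>k\<le>N. coeff P k * z ^ k)"
    by (rule sum.mono_neutral_left) (use assms in \<open>auto simp: coeff_eq_0\<close>)
  finally show ?thesis .
qed

lemma pstar_1:
  assumes "degree P \<le> N"
  shows "poly (pstar N P) 1 = cnj (poly P 1)"
  unfolding pstar_def poly_sum poly_upto[OF assms] by (simp add: poly_monom)

lemma pstar_sphere:
  assumes "degree P \<le> N" and z: "norm z = 1"
  shows "poly P z = z ^ N * cnj (poly (pstar N P) z)"
proof -
  have cz: "cnj z * z = 1" using unit_cnj[OF z] .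
  have t: "z ^ N * cnj z ^ (N - k) = z ^ k" if "k \<le> N" for k
  proof -
    have "z ^ N = z ^ k * z ^ (N - k)" using that by (simp add: power_add[symmetric])
    then have "z ^ N * cnj z ^ (N - k) = z ^ k * (cnj z * z) ^ (N - k)"
      by (simp add: power_mult_distrib mult_ac)
    then show ?thesis using cz by simp
  qed
  have "z ^ N * cnj (poly (pstar N P) z) = (\<Sum>k\<le>N. coeff P k * (z ^ N * cnj z ^ (N - k)))"
    unfolding pstar_def poly_sum by (simp add: poly_monom sum_distrib_left mult_ac)
  also have "\<dots> = (\<Sum>k\<le>N. coeff P k * z ^ k)" by (intro sum.cong refl) (simp add: t)
  also have "\<dots> = poly P z" using poly_upto[OF assms(1)] by simp
  finally show ?thesis by simp
qed

lemma poly_deg0: "degree (p::complex poly) \<le> 0 \<Longrightarrow> poly p w = coeff p 0"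
  using poly_upto[of p 0 w] by simp


section \<open>The number k0\<close>

lemma Mdot_pos:
  assumes Mpos: "\<forall>i. M i > 0" and J: "J \<noteq> (\<lambda>_. 0)"
  shows "Mdot M (J::'n::finite \<Rightarrow> nat) \<ge> 1"
proof -
  obtain j where "J j \<noteq> 0" using J by auto
  then have "M j \<le> Mdot M J" by (intro Mdot_ge) auto
  then show ?thesis using Mpos by (metis less_le_trans less_one not_less)
qed

lemma kzero_props:
  fixes M :: "'n::finite \<Rightarrow> nat"
  assumes Mpos: "\<forall>i. M i > 0"
    and supp: "\<forall>J K. \<alpha> J K \<noteq> 0 \<longrightarrow> Mdot M J + Mdot M K = d"
    and az: "\<forall>J K. (J = (\<lambda>_. 0) \<or> K = (\<lambda>_. 0)) \<longrightarrow> \<alpha> J K = 0"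
    and Pr: "\<forall>z. Im (Ppoly M d \<alpha> z (\<lambda>l. cnj (z l))) = 0"
    and Pnz: "\<exists>z. Preal M d \<alpha> z \<noteq> 0"
  shows "(\<forall>J K. \<alpha> J K \<noteq> 0 \<longrightarrow> Mdot M K \<le> kzero M d \<alpha>) \<and> kzero M d \<alpha> \<le> d - 1"
proof -
  have J1: "Mdot M J \<ge> 1" if "\<alpha> J K \<noteq> 0" for J K
    using that az Mdot_pos[OF Mpos, of J] by blast
  define S where "S = (\<lambda>k. d div 2 \<le> k \<and> k \<le> d - 1 \<and> (\<exists>J K. \<alpha> J K \<noteq> 0 \<and> Mdot M K = k))"
  have k0S: "kzero M d \<alpha> = Greatest S" by (simp add: kzero_def S_def)
  have inS: "S (Mdot M K)" if a: "\<alpha> J K \<noteq> 0" and b: "d div 2 \<le> Mdot M K" for J K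
  proof -
    have "Mdot M K \<le> d - 1" using supp a J1[OF a] by fastforce
    then show ?thesis unfolding S_def using a b by blast
  qed
  have ex: "\<exists>k. S k"
  proof (rule ccontr)
    assume nex: "\<not> (\<exists>k. S k)"
    have small: "Mdot M K < Mdot M J" if a: "\<alpha> J K \<noteq> 0" for J K
    proof -
      have "Mdot M K < d div 2" using inS[OF a] nex by (meson not_le)
      then show ?thesis using supp a by fastforce
    qed
    obtain z0 where z0: "Preal M d \<alpha> z0 \<noteq> 0" using Pnz by blast
    define cz where "cz = (\<lambda>l. cnj (z0 l))"
    define \<phi> where "\<phi> = (\<lambda>w. \<Sum>(J, K)\<in>idx M d. \<alpha> J K * w ^ (Mdot M J - Mdot M K) * mono J z0 * mono K cz)"
    have DA\<phi>: "DA \<phi>" unfolding \<phi>_def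
    proof (rule DA_sum)
      fix p assume "p \<in> idx M d"
      obtain J K where p: "p = (J, K)" by (cases p)
      have "DA (\<lambda>w. \<alpha> J K * w ^ (Mdot M J - Mdot M K) * mono J z0 * mono K cz)"
        by (intro DA_mult DA_const DA_pow)
      then show "DA (\<lambda>w. case p of (J, K) \<Rightarrow> \<alpha> J K * w ^ (Mdot M J - Mdot M K) * mono J z0 * mono K cz)"
        by (simp add: p)
    qed
    have sph: "\<phi> w = Ppoly M d \<alpha> (sc w M z0) (\<lambda>l. cnj (sc w M z0 l))" if w: "w \<in> sphere 0 1" for w
    proof -
      have cw: "cnj w * w = 1" using unit_cnj w by auto
      have cs: "(\<lambda>l. cnj (sc w M z0 l)) = sc (cnj w) M cz" by (simp add: sc_def cz_def)
      show ?thesis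
        unfolding \<phi>_def Ppoly_def cs mono_sc
        apply (rule sum.cong[OF refl])
        subgoal for x
          apply (cases x)
          apply hypsubst
          apply (simp only: prod.case)
        proof -
          fix J K
          show "\<alpha> J K * w ^ (Mdot M J - Mdot M K) * mono J z0 * mono K cz =
                \<alpha> J K * (w ^ Mdot M J * mono J z0) * (cnj w ^ Mdot M K * mono K cz)"
          proof (cases "\<alpha> J K = 0")
            case True then show ?thesis by simp
          next
            case False
            then have "Mdot M K < Mdot M J" by (rule small)
            then have "w ^ Mdot M J = w ^ (Mdot M J - Mdot M K) * w ^ Mdot M K"
              by (simp add: power_add[symmetric])
            moreover have "w ^ Mdot M K * cnj w ^ Mdot M K = 1"
              using cw by (metis mult.commute power_mult_distrib power_one)
            ultimately show ?thesis by (simp add: algebra_simps)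
          qed
        qed
        done
    qed
    have real: "\<phi> w = w ^ 0 * cnj (\<phi> w)" if w: "w \<in> sphere 0 1" for w
    proof -
      have "Im (\<phi> w) = 0" using sph[OF w] Pr[rule_format, of "sc w M z0"] by simp
      then show ?thesis by (simp add: complex_eq_iff)
    qed
    obtain p where dp: "degree p \<le> 0" and pe: "\<forall>w\<in>cball 0 1. \<phi> w = poly p w"
      using lemK[OF DA\<phi> DA\<phi>] real by blast
    have "\<phi> 1 = \<phi> 0" using pe poly_deg0[OF dp] by simp
    moreover have "\<phi> 0 = 0" unfolding \<phi>_def
    proof (rule sum.neutral, rule ballI)
      fix x assume "x \<in> idx M d"
      obtain J K where x: "x = (J, K)" by (cases x)
      show "(case x of (J, K) \<Rightarrow> \<alpha> J K * 0 ^ (Mdot M J - Mdot M K) * mono J z0 * mono K cz) = 0"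
      proof (cases "\<alpha> J K = 0")
        case True then show ?thesis by (simp add: x)
      next
        case False then have "Mdot M K < Mdot M J" by (rule small)
        then show ?thesis by (simp add: x)
      qed
    qed
    moreover have "\<phi> 1 = Ppoly M d \<alpha> z0 cz" unfolding \<phi>_def Ppoly_def by simp
    ultimately have "Ppoly M d \<alpha> z0 cz = 0" by simp
    then show False using z0 by (simp add: Preal_def cz_def)
  qed
  then obtain k1 where k1: "S k1" by blast
  have bnd: "\<And>y. S y \<Longrightarrow> y \<le> d - 1" by (simp add: S_def)
  have Sk0: "S (kzero M d \<alpha>)" unfolding k0S by (rule GreatestI_nat[of S k1 "d - 1", OF k1 bnd])
  have le: "y \<le> kzero M d \<alpha>" if "S y" for y unfolding k0S by (rule Greatest_le_nat[of S y "d - 1", OF that bnd])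
  have "Mdot M K \<le> kzero M d \<alpha>" if a: "\<alpha> J K \<noteq> 0" for J K
  proof (cases "d div 2 \<le> Mdot M K")
    case True then show ?thesis using le inS[OF a] by blast
  next
    case False then show ?thesis using Sk0 by (simp add: S_def)
  qed
  moreover have "kzero M d \<alpha> \<le> d - 1" using Sk0 by (simp add: S_def)
  ultimately show ?thesis by blast
qed


section \<open>Consequences of L = 0\<close>

lemma L_cons:
  assumes L: "L_vanishes_at M d \<alpha> v g (h, gg, ht, gt) \<zeta>"
  defines "k0 \<equiv> kzero M d \<alpha>"
  shows "Re (\<i> * (inverse \<zeta> ^ k0 * gt \<zeta> - \<zeta> ^ k0 * cnj (gt \<zeta>))) = 0"
    and "\<And>i. ht i \<zeta> + 2 * (gt \<zeta> * Pz M d \<alpha> i (hv M v \<zeta>) (\<lambda>l. cnj (hv M v \<zeta> l)) +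
            (- (\<zeta> ^ k0) / 2) * dPz M d \<alpha> i (hv M v \<zeta>) (\<lambda>l. h l \<zeta>) (\<lambda>l. cnj (hv M v \<zeta> l)) (\<lambda>l. cnj (h l \<zeta>))) = 0"
    and "(\<forall>i. h i \<zeta> = 0) \<Longrightarrow> Re (gg \<zeta>) = 0"
proof -
  define p where "p = f0_pt M d \<alpha> v g \<zeta>"
  define F where "F = (h, gg, ht, gt)"
  have L1: "((\<lambda>t. rho1 M d \<alpha> (line_pt p F \<zeta> t)) has_real_derivative 0) (at 0)"
    and L2: "\<And>i. ((\<lambda>t. rhoRe M d \<alpha> i (line_pt p F \<zeta> t)) has_real_derivative 0) (at 0)"
    and L3: "\<And>i. ((\<lambda>t. rhoIm M d \<alpha> i (line_pt p F \<zeta> t)) has_real_derivative 0) (at 0)"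
    and L4: "((\<lambda>t. rhoLast k0 \<zeta> (line_pt p F \<zeta> t)) has_real_derivative 0) (at 0)"
    using L unfolding L_vanishes_at_def Let_def p_def F_def k0_def by blast+
  define wt0 where "wt0 = - (\<zeta> ^ k0) / 2"
  define z0 where "z0 = hv M v \<zeta>"
  define zt0 where "zt0 = (\<lambda>i. \<zeta> ^ k0 * Pz M d \<alpha> i z0 (\<lambda>l. cnj (z0 l)))"
  have p: "p = (z0, g \<zeta>, zt0, wt0)" by (simp add: p_def f0_pt_def z0_def zt0_def wt0_def k0_def)
  have lp: "line_pt p F \<zeta> t = ((\<lambda>i. z0 i + of_real t * h i \<zeta>), g \<zeta> + of_real t * gg \<zeta>,
       (\<lambda>i. zt0 i + of_real t * ht i \<zeta>), wt0 + of_real t * gt \<zeta>)" for t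
    by (simp add: p F_def line_pt_def)
  define Z4 where "Z4 = (\<lambda>s. \<i> * (inverse \<zeta> ^ k0 * (wt0 + s * gt \<zeta>) - \<zeta> ^ k0 * (cnj wt0 + s * cnj (gt \<zeta>))))"
  have e4: "(\<lambda>t. rhoLast k0 \<zeta> (line_pt p F \<zeta> t)) = (\<lambda>t. Re (Z4 (of_real t)))"
    by (rule ext) (simp add: lp rhoLast_def Z4_def algebra_simps)
  have d4: "(Z4 has_field_derivative \<i> * (inverse \<zeta> ^ k0 * gt \<zeta> - \<zeta> ^ k0 * cnj (gt \<zeta>))) (at 0)"
    unfolding Z4_def by (auto intro!: derivative_eq_intros)
  show "Re (\<i> * (inverse \<zeta> ^ k0 * gt \<zeta> - \<zeta> ^ k0 * cnj (gt \<zeta>))) = 0"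
    by (rule deriv_re_zero[OF d4]) (use L4 e4 in simp)
  fix i
  define Z2 where "Z2 = (\<lambda>s. zt0 i + s * ht i \<zeta> + 2 * ((wt0 + s * gt \<zeta>) *
       Pz M d \<alpha> i (\<lambda>l. z0 l + s * h l \<zeta>) (\<lambda>l. cnj (z0 l) + s * cnj (h l \<zeta>))))"
  have e2: "(\<lambda>t. rhoRe M d \<alpha> i (line_pt p F \<zeta> t)) = (\<lambda>t. 2 * Re (Z2 (of_real t)))"
    by (rule ext) (simp add: lp rhoRe_def Z2_def)
  have e3: "(\<lambda>t. rhoIm M d \<alpha> i (line_pt p F \<zeta> t)) = (\<lambda>t. - 2 * Im (Z2 (of_real t)))"
    by (rule ext) (simp add: lp rhoIm_def Z2_def)
  have dP: "((\<lambda>s. Pz M d \<alpha> i (\<lambda>l. z0 l + s * h l \<zeta>) (\<lambda>l. cnj (z0 l) + s * cnj (h l \<zeta>))) has_field_derivative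
      dPz M d \<alpha> i z0 (\<lambda>l. h l \<zeta>) (\<lambda>l. cnj (z0 l)) (\<lambda>l. cnj (h l \<zeta>))) (at 0)"
    by (rule Pz_line_deriv)
  have d2: "(Z2 has_field_derivative ht i \<zeta> + 2 * (gt \<zeta> * Pz M d \<alpha> i z0 (\<lambda>l. cnj (z0 l)) +
       wt0 * dPz M d \<alpha> i z0 (\<lambda>l. h l \<zeta>) (\<lambda>l. cnj (z0 l)) (\<lambda>l. cnj (h l \<zeta>)))) (at 0)"
    unfolding Z2_def by (auto intro!: derivative_eq_intros dP)
  have "ht i \<zeta> + 2 * (gt \<zeta> * Pz M d \<alpha> i z0 (\<lambda>l. cnj (z0 l)) +
       wt0 * dPz M d \<alpha> i z0 (\<lambda>l. h l \<zeta>) (\<lambda>l. cnj (z0 l)) (\<lambda>l. cnj (h l \<zeta>))) = 0"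
    by (rule deriv_re_im_zero[OF d2]) (use L2[of i] L3[of i] e2 e3 in simp_all)
  then show "ht i \<zeta> + 2 * (gt \<zeta> * Pz M d \<alpha> i (hv M v \<zeta>) (\<lambda>l. cnj (hv M v \<zeta> l)) +
            (- (\<zeta> ^ k0) / 2) * dPz M d \<alpha> i (hv M v \<zeta>) (\<lambda>l. h l \<zeta>) (\<lambda>l. cnj (hv M v \<zeta> l)) (\<lambda>l. cnj (h l \<zeta>))) = 0"
    by (simp add: z0_def wt0_def)
next
  assume h0: "\<forall>i. h i \<zeta> = 0"
  define p where "p = f0_pt M d \<alpha> v g \<zeta>"
  define F where "F = (h, gg, ht, gt)"
  have L1: "((\<lambda>t. rho1 M d \<alpha> (line_pt p F \<zeta> t)) has_real_derivative 0) (at 0)"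
    using L unfolding L_vanishes_at_def Let_def p_def F_def by blast
  define Z1 where "Z1 = (\<lambda>s. - (g \<zeta> + s * gg \<zeta>) + of_real (Preal M d \<alpha> (hv M v \<zeta>)))"
  have e1: "(\<lambda>t. rho1 M d \<alpha> (line_pt p F \<zeta> t)) = (\<lambda>t. Re (Z1 (of_real t)))"
    by (rule ext) (simp add: p_def F_def f0_pt_def line_pt_def rho1_def Z1_def h0)
  have d1: "(Z1 has_field_derivative - gg \<zeta>) (at 0)"
    unfolding Z1_def by (auto intro!: derivative_eq_intros)
  have "Re (- gg \<zeta>) = 0" by (rule deriv_re_zero[OF d1]) (use L1 e1 in simp)
  then show "Re (gg \<zeta>) = 0" by simp
qed


lemma sphere_ext:
  fixes F G :: "complex \<Rightarrow> complex"
  assumes cF: "continuous_on (sphere 0 1) F" and cG: "continuous_on (sphere 0 1) G"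
    and eq: "\<forall>\<zeta>\<in>sphere 0 1. \<zeta> \<noteq> 1 \<longrightarrow> F \<zeta> = G \<zeta>"
  shows "\<forall>\<zeta>\<in>sphere 0 1. F \<zeta> = G \<zeta>"
proof
  fix \<zeta> :: complex assume z: "\<zeta> \<in> sphere 0 1"
  show "F \<zeta> = G \<zeta>"
  proof (cases "\<zeta> = 1")
    case False then show ?thesis using eq z by blast
  next
    case True
    have con: "connected (sphere (0::complex) 1)" by (rule connected_sphere) simp
    have ns: "sphere (0::complex) 1 \<noteq> {x}" for x
    proof
      assume a: "sphere (0::complex) 1 = {x}"
      have "1 \<in> sphere (0::complex) 1" "-1 \<in> sphere (0::complex) 1" by auto
      then show False using a by auto
    qed
    have "1 islimpt sphere (0::complex) 1" by (rule connected_imp_perfect[OF con _ ns]) simp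
    moreover have "insert 1 (sphere (0::complex) 1 - {1}) = sphere 0 1" by auto
    ultimately have "1 islimpt (insert 1 (sphere (0::complex) 1 - {1}))" by simp
    then have l: "1 islimpt (sphere (0::complex) 1 - {1})" using islimpt_insert by blast
    have cl: "closed {x \<in> sphere 0 1. (\<lambda>x. F x - G x) x = 0}"
      by (intro continuous_closed_preimage_constant continuous_on_diff cF cG) auto
    have sub: "sphere 0 1 - {1} \<subseteq> {x \<in> sphere 0 1. (\<lambda>x. F x - G x) x = 0}" using eq by auto
    have "1 \<in> closure (sphere (0::complex) 1 - {1})" using l by (simp add: closure_def)
    then have "F 1 - G 1 = 0" using closure_minimal[OF sub cl] by blast
    then show ?thesis using True by simp
  qed
qed

lemma zero_sphere_cball:
  assumes "DA \<phi>" and z: "\<forall>\<zeta>\<in>sphere 0 1. \<phi> \<zeta> = 0"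
  shows "\<forall>w\<in>cball 0 1. \<phi> w = 0"
proof -
  have "\<forall>\<zeta>\<in>sphere 0 1. \<phi> \<zeta> = \<zeta> ^ 0 * cnj ((\<lambda>_. 0) \<zeta>)" using z by simp
  then obtain p where dp: "degree p \<le> 0" and pe: "\<forall>w\<in>cball 0 1. \<phi> w = poly p w"
    using lemK[OF assms(1) DA_const] by blast
  have "\<phi> 1 = 0" using z by simp
  then have "coeff p 0 = 0" using pe poly_deg0[OF dp] by simp
  then show ?thesis using pe poly_deg0[OF dp] by simp
qed

lemma unit_inverse: "norm (z::complex) = 1 \<Longrightarrow> inverse z = cnj z"
  using unit_cnj[of z] by (metis inverse_unique mult.commute)

lemma step2_eq:
  fixes \<zeta> :: complex
  assumes z: "\<zeta> \<in> sphere 0 1" and z1: "\<zeta> \<noteq> 1"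
    and supp: "\<forall>J K. \<alpha> J K \<noteq> 0 \<longrightarrow> Mdot M K \<le> kzero M d \<alpha>"
    and hb: "\<forall>l. h l \<zeta> = (1 - \<zeta>) ^ (M l) * f l \<zeta>"
    and htb: "ht i \<zeta> = (1 - \<zeta>) ^ (d - M i) * ft i \<zeta>"
    and eq: "ht i \<zeta> + 2 * (gt \<zeta> * Pz M d \<alpha> i (hv M v \<zeta>) (\<lambda>l. cnj (hv M v \<zeta> l)) +
            (- (\<zeta> ^ kzero M d \<alpha>) / 2) * dPz M d \<alpha> i (hv M v \<zeta>) (\<lambda>l. h l \<zeta>) (\<lambda>l. cnj (hv M v \<zeta> l)) (\<lambda>l. cnj (h l \<zeta>))) = 0"
    and gt0: "gt \<zeta> = 0"
  shows "ft i \<zeta> - (\<Sum>j\<in>UNIV. poly (pR M d \<alpha> v (kzero M d \<alpha>) i j) \<zeta> * f j \<zeta>) =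
         (\<Sum>j\<in>UNIV. poly (pQ M d \<alpha> v (kzero M d \<alpha>) i j) \<zeta> * cnj ((- \<zeta>) ^ (M j) * f j \<zeta>))"
proof -
  define k0 where "k0 = kzero M d \<alpha>"
  define s where "s = 1 - \<zeta>"
  define u where "u = -1 / \<zeta>"
  have nz: "norm \<zeta> = 1" using z by simp
  have z0: "\<zeta> \<noteq> 0" using nz by auto
  have s0: "s \<noteq> 0" using z1 by (simp add: s_def)
  have cz: "cnj \<zeta> = inverse \<zeta>" using unit_inverse[OF nz] by simp
  have cs: "cnj s = s * u" using z0 by (simp add: s_def u_def cz field_simps)
  have cs': "1 - cnj \<zeta> = (1 - \<zeta>) * u" using cs by (simp add: s_def)
  have cu': "- cnj \<zeta> = u" using z0 by (simp add: u_def cz field_simps)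
  have cu: "cnj (- \<zeta>) = u" using z0 by (simp add: u_def cz field_simps)
  have e1: "hv M v \<zeta> = sc s M v" by (simp add: hv_def sc_def s_def)
  have e2: "(\<lambda>l. h l \<zeta>) = sc s M (\<lambda>l. f l \<zeta>)" by (simp add: hb sc_def s_def)
  have e3: "(\<lambda>l. cnj (hv M v \<zeta> l)) = sc (s * u) M (\<lambda>l. cnj (v l))"
    by (simp add: hv_def sc_def cs' s_def)
  have e4: "(\<lambda>l. cnj (h l \<zeta>)) = sc (s * u) M (\<lambda>l. cnj (f l \<zeta>))"
    by (simp add: hb sc_def cs' s_def)
  have "ht i \<zeta> = \<zeta> ^ k0 * dPz M d \<alpha> i (hv M v \<zeta>) (\<lambda>l. h l \<zeta>) (\<lambda>l. cnj (hv M v \<zeta> l)) (\<lambda>l. cnj (h l \<zeta>))"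
    using eq gt0 by (simp add: k0_def field_simps)
  also have "\<dots> = s ^ (d - M i) * (\<zeta> ^ k0 * Einner M d \<alpha> i u v (\<lambda>l. f l \<zeta>) (\<lambda>l. cnj (v l)) (\<lambda>l. cnj (f l \<zeta>)))"
    unfolding e3 e4 unfolding e1 e2 dPz_hom by simp
  finally have "s ^ (d - M i) * ft i \<zeta> = s ^ (d - M i) * (\<zeta> ^ k0 * Einner M d \<alpha> i u v (\<lambda>l. f l \<zeta>) (\<lambda>l. cnj (v l)) (\<lambda>l. cnj (f l \<zeta>)))"
    using htb by (simp add: s_def)
  then have ft: "ft i \<zeta> = \<zeta> ^ k0 * Einner M d \<alpha> i u v (\<lambda>l. f l \<zeta>) (\<lambda>l. cnj (v l)) (\<lambda>l. cnj (f l \<zeta>))"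
    using s0 by simp
  also have "\<dots> = (\<Sum>j\<in>UNIV. poly (pR M d \<alpha> v k0 i j) \<zeta> * f j \<zeta>) +
         (\<Sum>j\<in>UNIV. Qv_entry M d \<alpha> v i j \<zeta> * (u ^ (M j) * cnj (f j \<zeta>)))"
    unfolding u_def k0_def by (rule Einner_identity[OF z0 supp])
  also have "(\<Sum>j\<in>UNIV. Qv_entry M d \<alpha> v i j \<zeta> * (u ^ (M j) * cnj (f j \<zeta>))) =
             (\<Sum>j\<in>UNIV. poly (pQ M d \<alpha> v k0 i j) \<zeta> * cnj ((- \<zeta>) ^ (M j) * f j \<zeta>))"
    by (intro sum.cong refl) (simp add: pQ_eval[OF z0 supp] k0_def cu')
  finally show ?thesis by (simp add: k0_def)
qed

lemma cramer_step:
  fixes Pm :: "'n::finite \<Rightarrow> 'n \<Rightarrow> complex poly" and B Fv :: "'n \<Rightarrow> complex \<Rightarrow> complex"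
  assumes eq: "\<And>i. B i \<zeta> = (\<Sum>j\<in>UNIV. poly (Pm i j) \<zeta> * cnj (Fv j \<zeta>))"
  shows "det (\<chi> i j. if j = k then B i \<zeta> else poly (Pm i j) \<zeta> :: complex^'n^'n) =
         cnj (Fv k \<zeta>) * det (\<chi> i j. poly (Pm i j) \<zeta> :: complex^'n^'n)"
proof -
  define A where "A = (\<chi> i j. poly (Pm i j) \<zeta> :: complex^'n^'n)"
  define x where "x = (\<chi> j. cnj (Fv j \<zeta>) :: complex^'n)"
  have ax: "(A *v x) $ i = B i \<zeta>" for i
    by (simp add: matrix_vector_mult_def A_def x_def eq)
  have "(\<chi> i j. if j = k then B i \<zeta> else poly (Pm i j) \<zeta> :: complex^'n^'n) =
             (\<chi> i j. if j = k then (A *v x) $ i else A $ i $ j)"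
    by (simp add: vec_eq_iff ax, simp add: A_def)
  then show ?thesis using cramer_lemma[where A=A and k=k and x=x] by (simp add: A_def x_def)
qed

lemma A_DA: "f \<in> A_space k a \<Longrightarrow> DA f"
  by (simp add: A_space_def DA_def)

lemma A0_unpack:
  assumes "F \<in> A0_space k a m"
  shows "\<exists>f. DA f \<and> (\<forall>\<zeta>\<in>cball 0 1. F \<zeta> = (1 - \<zeta>) ^ m * f \<zeta>)"
  using assms A_DA unfolding A0_space_def by blast

lemma DA_cong: "DA f \<Longrightarrow> (\<forall>\<zeta>\<in>cball 0 1. g \<zeta> = f \<zeta>) \<Longrightarrow> DA g"
  unfolding DA_def
  by (metis ball_subset_cball continuous_on_cong holomorphic_cong subsetD)


lemma dPz_zero: "dPz M d \<alpha> i a (\<lambda>_. 0) c (\<lambda>_. 0) = 0"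
  unfolding dPz_def by (intro sum.neutral) (auto simp: monoD_zero)

lemma DA_pow1: "DA (\<lambda>w. (1 - w) ^ m)"
  unfolding DA_def by (auto intro!: continuous_intros holomorphic_intros)

lemma DA_negpow: "DA (\<lambda>w. (- w) ^ m)"
  unfolding DA_def by (auto intro!: continuous_intros holomorphic_intros)

lemma DA_cont_sphere: "DA f \<Longrightarrow> continuous_on (sphere 0 1) f"
  unfolding DA_def by (rule continuous_on_subset) auto

lemma Re_i_diff: "Re (\<i> * (X - cnj X)) = - 2 * Im X"
  by simp

theorem mainTheorem7:
  fixes M :: "'n::finite \<Rightarrow> nat" and d :: nat
    and \<alpha> :: "('n \<Rightarrow> nat) \<Rightarrow> ('n \<Rightarrow> nat) \<Rightarrow> complex"
    and v :: "'n \<Rightarrow> complex" and g :: "complex \<Rightarrow> complex"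
    and k :: nat and a :: real
  assumes M_pos_even: "\<forall>i. M i > 0 \<and> even (M i)"
    and d_even: "even d"
    and alpha_support: "\<forall>J K. \<alpha> J K \<noteq> 0 \<longrightarrow> Mdot M J + Mdot M K = d"
    and alpha_zero: "\<forall>J K. (J = (\<lambda>_. 0) \<or> K = (\<lambda>_. 0)) \<longrightarrow> \<alpha> J K = 0"
    and P_real: "\<forall>z. Im (Ppoly M d \<alpha> z (\<lambda>l. cnj (z l))) = 0"
    and P_nonzero: "\<exists>z. Preal M d \<alpha> z \<noteq> 0"
    and adm: "admissible_pair M d \<alpha> v g"
    and g1: "g 1 = 0"
    and k_ge: "k \<ge> 1" and a_pos: "0 < a" and a_lt: "a < 1"
  shows "\<exists>l0::nat. l0 \<le> 6 * CARD('n) * d \<and>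
           (\<forall>F\<in>Y_space k a M d.
              (\<forall>\<zeta>\<in>sphere 0 1. L_vanishes_at M d \<alpha> v g F \<zeta>) \<and>
              disc4_derivs_vanish_at_1 l0 F \<longrightarrow> disc4_zero F)"
proof -
  define k0 where "k0 = kzero M d \<alpha>"
  have Mpos: "\<forall>i. M i > 0" using M_pos_even by blast
  have kp: "(\<forall>J K. \<alpha> J K \<noteq> 0 \<longrightarrow> Mdot M K \<le> kzero M d \<alpha>) \<and> kzero M d \<alpha> \<le> d - 1"
    by (rule kzero_props[OF Mpos alpha_support alpha_zero P_real P_nonzero])
  then have supp: "\<forall>J K. \<alpha> J K \<noteq> 0 \<longrightarrow> Mdot M K \<le> kzero M d \<alpha>" and k0d: "k0 \<le> d - 1"
    by (auto simp: k0_def)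
  have n1: "CARD('n) \<ge> 1" using finite_UNIV_card_ge_0[of] by (simp add: Suc_le_eq)
  define L0 where "L0 = 6 * CARD('n) * d"
  have L2k: "2 * k0 \<le> L0"
  proof -
    have "2 * k0 \<le> 6 * d" using k0d by linarith
    also have "\<dots> \<le> 6 * CARD('n) * d" using n1 by simp
    finally show ?thesis by (simp add: L0_def)
  qed
  have Lnk: "CARD('n) * k0 \<le> L0"
  proof -
    have "CARD('n) * k0 \<le> CARD('n) * d" using k0d by simp
    also have "\<dots> \<le> 6 * CARD('n) * d" by simp
    finally show ?thesis by (simp add: L0_def)
  qed
  show ?thesis
  proof (intro exI[of _ L0] conjI ballI impI)
    show "L0 \<le> 6 * CARD('n) * d" by (simp add: L0_def)
    fix F assume FY: "F \<in> Y_space k a M d"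
      and LH: "(\<forall>\<zeta>\<in>sphere 0 1. L_vanishes_at M d \<alpha> v g F \<zeta>) \<and> disc4_derivs_vanish_at_1 L0 F"
    obtain h gg ht gt where F: "F = (h, gg, ht, gt)" by (cases F)
    have hA: "\<forall>i. h i \<in> A0_space k a (M i)" and ggA: "gg \<in> A0_space k a 1"
      and htA: "\<forall>i. ht i \<in> A0_space k a (d - M i)" and gtA: "gt \<in> A_space k a"
      using FY by (auto simp: F Y_space_def)
    have "\<forall>i. \<exists>fi. DA fi \<and> (\<forall>\<zeta>\<in>cball 0 1. h i \<zeta> = (1 - \<zeta>) ^ (M i) * fi \<zeta>)"
      using hA A0_unpack by blast
    then obtain f where f: "\<And>i. DA (f i)" "\<And>i. \<forall>\<zeta>\<in>cball 0 1. h i \<zeta> = (1 - \<zeta>) ^ (M i) * f i \<zeta>"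
      by metis
    have "\<forall>i. \<exists>fi. DA fi \<and> (\<forall>\<zeta>\<in>cball 0 1. ht i \<zeta> = (1 - \<zeta>) ^ (d - M i) * fi \<zeta>)"
      using htA A0_unpack by blast
    then obtain ft where ft: "\<And>i. DA (ft i)" "\<And>i. \<forall>\<zeta>\<in>cball 0 1. ht i \<zeta> = (1 - \<zeta>) ^ (d - M i) * ft i \<zeta>"
      by metis
    obtain g1 where g1: "DA g1" "\<forall>\<zeta>\<in>cball 0 1. gg \<zeta> = (1 - \<zeta>) ^ 1 * g1 \<zeta>"
      using A0_unpack[OF ggA] by blast
    have DAh: "DA (h i)" for i using DA_cong[OF DA_mult[OF DA_pow1 f(1)] f(2)] .
    have DAht: "DA (ht i)" for i using DA_cong[OF DA_mult[OF DA_pow1 ft(1)] ft(2)] .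
    have DAgg: "DA gg" using DA_cong[OF DA_mult[OF DA_pow1 g1(1)] g1(2)] .
    have DAgt: "DA gt" using A_DA[OF gtA] .
    have Lz: "\<And>\<zeta>. \<zeta> \<in> sphere 0 1 \<Longrightarrow> L_vanishes_at M d \<alpha> v g (h, gg, ht, gt) \<zeta>" using LH F by auto
    have dvh: "\<And>i. derivs_vanish_at_1 L0 (h i)" and dvgt: "derivs_vanish_at_1 L0 gt"
      using LH F by (auto simp: disc4_derivs_vanish_at_1_def)
    have gtsph: "\<forall>\<zeta>\<in>sphere 0 1. gt \<zeta> = \<zeta> ^ (2 * k0) * cnj (gt \<zeta>)"
    proof
      fix \<zeta> :: complex assume z: "\<zeta> \<in> sphere 0 1"
      have nz: "norm \<zeta> = 1" using z by simp
      have l: "Re (\<i> * (inverse \<zeta> ^ k0 * gt \<zeta> - \<zeta> ^ k0 * cnj (gt \<zeta>))) = 0"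
        using L_cons(1)[OF Lz[OF z]] by (simp add: k0_def)
      define X where "X = cnj \<zeta> ^ k0 * gt \<zeta>"
      have "inverse \<zeta> ^ k0 * gt \<zeta> - \<zeta> ^ k0 * cnj (gt \<zeta>) = X - cnj X"
        by (simp add: X_def unit_inverse[OF nz])
      then have "Im X = 0" using l Re_i_diff[of X] by simp
      then have cX: "cnj X = X" by (simp add: complex_eq_iff)
      have zz: "\<zeta> ^ k0 * cnj \<zeta> ^ k0 = 1" using unit_cnj[OF nz] by (metis mult.commute power_mult_distrib power_one)
      have "gt \<zeta> = \<zeta> ^ k0 * X" using zz by (simp add: X_def mult.assoc[symmetric])
      also have "\<dots> = \<zeta> ^ k0 * cnj X" using cX by simp
      also have "\<dots> = \<zeta> ^ (2 * k0) * cnj (gt \<zeta>)" by (simp add: X_def power_add[symmetric] mult_2 mult.assoc)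
      finally show "gt \<zeta> = \<zeta> ^ (2 * k0) * cnj (gt \<zeta>)" .
    qed
    obtain pg where dpg: "degree pg \<le> 2 * k0" and pge: "\<forall>w\<in>cball 0 1. gt w = poly pg w"
      using lemK[OF DAgt DAgt gtsph] by blast
    have "pg = 0"
      by (rule derivs_poly_zero[OF dvgt, of 1 pg]) (use pge dpg L2k in auto)
    then have gt0: "\<forall>w\<in>cball 0 1. gt w = 0" using pge by simp
    define Pm where "Pm = (\<lambda>i j. pQ M d \<alpha> v k0 i j)"
    define B where "B = (\<lambda>i w. ft i w - (\<Sum>j\<in>UNIV. poly (pR M d \<alpha> v k0 i j) w * f j w))"
    define Fv where "Fv = (\<lambda>j w. (- w) ^ (M j) * f j w)"
    have DAB: "DA (B i)" for i unfolding B_def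
      by (intro DA_diff ft(1) DA_sum DA_mult DA_poly f(1))
    have DAF: "DA (Fv j)" for j unfolding Fv_def by (intro DA_mult DA_negpow f(1))
    have Beq: "\<forall>\<zeta>\<in>sphere 0 1. B i \<zeta> = (\<Sum>j\<in>UNIV. poly (Pm i j) \<zeta> * cnj (Fv j \<zeta>))" for i
    proof (rule sphere_ext)
      show "continuous_on (sphere 0 1) (B i)" by (rule DA_cont_sphere[OF DAB])
      show "continuous_on (sphere 0 1) (\<lambda>\<zeta>. \<Sum>j\<in>UNIV. poly (Pm i j) \<zeta> * cnj (Fv j \<zeta>))"
        using DA_cont_sphere[OF DAF] by (intro continuous_intros) auto
      show "\<forall>\<zeta>\<in>sphere 0 1. \<zeta> \<noteq> 1 \<longrightarrow> B i \<zeta> = (\<Sum>j\<in>UNIV. poly (Pm i j) \<zeta> * cnj (Fv j \<zeta>))"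
      proof (intro ballI impI)
        fix \<zeta> :: complex assume z: "\<zeta> \<in> sphere 0 1" and z1: "\<zeta> \<noteq> 1"
        have zc: "\<zeta> \<in> cball 0 1" using z by simp
        have "ft i \<zeta> - (\<Sum>j\<in>UNIV. poly (pR M d \<alpha> v (kzero M d \<alpha>) i j) \<zeta> * f j \<zeta>) =
              (\<Sum>j\<in>UNIV. poly (pQ M d \<alpha> v (kzero M d \<alpha>) i j) \<zeta> * cnj ((- \<zeta>) ^ (M j) * f j \<zeta>))"
          by (rule step2_eq[where f=f and ft=ft and i=i and h=h and ht=ht and gt=gt and M=M and d=d and \<alpha>=\<alpha> and v=v, OF z z1 supp _ _ L_cons(2)[OF Lz[OF z], of i]])
             (use f(2) ft(2) gt0 zc in auto)
        then show "B i \<zeta> = (\<Sum>j\<in>UNIV. poly (Pm i j) \<zeta> * cnj (Fv j \<zeta>))"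
          by (simp add: B_def Pm_def Fv_def k0_def)
      qed
    qed
    obtain P where dP: "degree P \<le> CARD('n) * k0"
      and Pe: "\<forall>z. poly P z = det (\<chi> i j. poly (Pm i j) z :: complex^'n^'n)"
      using det_poly[of Pm k0] degree_pQ[OF Mpos] by (auto simp: Pm_def)
    define N where "N = CARD('n) * k0"
    define Pst where "Pst = pstar N P"
    have dPN: "degree P \<le> N" using dP by (simp add: N_def)
    have P1: "poly P 1 \<noteq> 0"
    proof -
      have "poly P 1 = det (\<chi> i j. Qv_entry M d \<alpha> v i j 1 :: complex^'n^'n)"
        using Pe by (simp add: Pm_def k0_def pQ_eval[OF _ supp])
      also have "\<dots> = Qv M d \<alpha> v 1" by (simp add: Qv_def)
      also have "\<dots> \<noteq> 0" using adm by (simp add: admissible_pair_def)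
      finally show ?thesis .
    qed
    have Pst1: "poly Pst 1 \<noteq> 0" using P1 pstar_1[OF dPN] by (simp add: Pst_def)
    then have Pst0: "Pst \<noteq> 0" by auto
    have h0: "\<forall>w\<in>cball 0 1. h kk w = 0" for kk
    proof -
      define \<Phi> where "\<Phi> = (\<lambda>w. det (\<chi> i j. if j = kk then B i w else poly (Pm i j) w :: complex^'n^'n))"
      have DA\<Phi>: "DA \<Phi>" unfolding \<Phi>_def
      proof (rule DA_det)
        fix i j
        show "DA (\<lambda>w. if j = kk then B i w else poly (Pm i j) w)"
          by (cases "j = kk") (simp_all add: DAB DA_poly)
      qed
      define \<phi>1 where "\<phi>1 = (\<lambda>w. (1 - w) ^ (M kk) * \<Phi> w)"
      define \<psi>1 where "\<psi>1 = (\<lambda>w. poly Pst w * h kk w)"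
      have DA\<phi>1: "DA \<phi>1" unfolding \<phi>1_def by (intro DA_mult DA_pow1 DA\<Phi>)
      have DA\<psi>1: "DA \<psi>1" unfolding \<psi>1_def by (intro DA_mult DA_poly DAh)
      have sph: "\<forall>\<zeta>\<in>sphere 0 1. \<phi>1 \<zeta> = \<zeta> ^ N * cnj (\<psi>1 \<zeta>)"
      proof
        fix \<zeta> :: complex assume z: "\<zeta> \<in> sphere 0 1"
        have nz: "norm \<zeta> = 1" using z by simp
        have zc: "\<zeta> \<in> cball 0 1" using z by simp
        have cz: "cnj \<zeta> * \<zeta> = 1" using unit_cnj[OF nz] .
        have c1: "cnj (1 - \<zeta>) = (1 - \<zeta>) * cnj (- \<zeta>)" using cz by (simp add: algebra_simps)
        have "\<Phi> \<zeta> = cnj (Fv kk \<zeta>) * det (\<chi> i j. poly (Pm i j) \<zeta> :: complex^'n^'n)"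
          unfolding \<Phi>_def by (rule cramer_step) (use Beq z in blast)
        also have "\<dots> = cnj (Fv kk \<zeta>) * poly P \<zeta>" using Pe by simp
        finally have \<Phi>z: "\<Phi> \<zeta> = cnj (Fv kk \<zeta>) * poly P \<zeta>" .
        have hz: "h kk \<zeta> = (1 - \<zeta>) ^ (M kk) * f kk \<zeta>" using f(2) zc by blast
        have A1: "(1 - \<zeta>) ^ (M kk) * cnj (Fv kk \<zeta>) = ((1 - \<zeta>) * cnj (- \<zeta>)) ^ (M kk) * cnj (f kk \<zeta>)"
          unfolding Fv_def by (simp only: complex_cnj_mult complex_cnj_power power_mult_distrib mult_ac)
        have A2: "((1 - \<zeta>) * cnj (- \<zeta>)) ^ (M kk) * cnj (f kk \<zeta>) = cnj (h kk \<zeta>)"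
          unfolding hz c1[symmetric] by (simp only: complex_cnj_mult complex_cnj_power)
        have "(1 - \<zeta>) ^ (M kk) * cnj (Fv kk \<zeta>) = cnj (h kk \<zeta>)" using A1 A2 by simp
        then have "\<phi>1 \<zeta> = cnj (h kk \<zeta>) * poly P \<zeta>" by (simp add: \<phi>1_def \<Phi>z mult.assoc[symmetric])
        also have "\<dots> = cnj (h kk \<zeta>) * (\<zeta> ^ N * cnj (poly Pst \<zeta>))"
          using pstar_sphere[OF dPN nz] by (simp add: Pst_def)
        also have "\<dots> = \<zeta> ^ N * cnj (\<psi>1 \<zeta>)" by (simp add: \<psi>1_def mult_ac)
        finally show "\<phi>1 \<zeta> = \<zeta> ^ N * cnj (\<psi>1 \<zeta>)" .
      qed
      obtain r where dr: "degree r \<le> N" and re: "\<forall>w\<in>cball 0 1. \<psi>1 w = poly r w"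
        using lemK[OF DA\<psi>1 DA\<phi>1 sphere_swap[OF sph]] by blast
      have "r = 0"
        by (rule derivs_poly_zero[OF dvh Pst1]) (use re dr Lnk in \<open>auto simp: \<psi>1_def N_def\<close>)
      then have "\<forall>w\<in>cball 0 1. poly Pst w * h kk w = 0" using re by (simp add: \<psi>1_def)
      moreover have "continuous_on (cball 0 1) (h kk)" using DAh[of kk] by (simp add: DA_def)
      ultimately show ?thesis using poly_mult_zero_cball[OF _ Pst0] by blast
    qed
    have ht0: "\<forall>w\<in>cball 0 1. ht i w = 0" for i
    proof (rule zero_sphere_cball[OF DAht], rule ballI)
      fix \<zeta> :: complex assume z: "\<zeta> \<in> sphere 0 1"
      have zc: "\<zeta> \<in> cball 0 1" using z by simp
      have e: "(\<lambda>l. h l \<zeta>) = (\<lambda>_. 0)" "(\<lambda>l. cnj (h l \<zeta>)) = (\<lambda>_. 0)" using h0 zc by auto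
      show "ht i \<zeta> = 0" using L_cons(2)[OF Lz[OF z], of i] gt0 zc unfolding e dPz_zero by simp
    qed
    have gg0: "\<forall>w\<in>cball 0 1. gg w = 0"
    proof -
      have "\<forall>\<zeta>\<in>sphere 0 1. gg \<zeta> = \<zeta> ^ 0 * cnj ((\<lambda>w. - gg w) \<zeta>)"
      proof
        fix \<zeta> :: complex assume z: "\<zeta> \<in> sphere 0 1"
        have zc: "\<zeta> \<in> cball 0 1" using z by simp
        have "Re (gg \<zeta>) = 0" using L_cons(3)[OF Lz[OF z]] h0 zc by blast
        then show "gg \<zeta> = \<zeta> ^ 0 * cnj ((\<lambda>w. - gg w) \<zeta>)" by (simp add: complex_eq_iff)
      qed
      moreover have DAn: "DA (\<lambda>w. - gg w)" using DA_diff[OF DA_const[of 0] DAgg] by simp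
      ultimately obtain p where dp: "degree p \<le> 0" and pe: "\<forall>w\<in>cball 0 1. gg w = poly p w"
        using lemK[OF DAgg DAn] by blast
      have "gg 1 = 0" using g1(2) by simp
      then have "coeff p 0 = 0" using pe poly_deg0[OF dp] by simp
      then show ?thesis using pe poly_deg0[OF dp] by simp
    qed
    show "disc4_zero F"
      unfolding F disc4_zero_def using h0 gg0 ht0 gt0 by blast
  qed
qed

end
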